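(* For any solution of mean curvature flow with perpendicular Neumann boundary condition on $\Sigma$ (as in the Setup), at every point of $\partial M\times[0,T)$, \[\Big\langle\nabla\frac{H}{S},\mu\Big\rangle=0.\]
   Context: Setup. Let $n\ge 2$ and let $\mathbb R^{n+1}_1$ denote $\mathbb R^{n+1}$ with the Minkowski metric $\langle x,y\rangle=x_1y_1+\dots+x_ny_n-x_{n+1}y_{n+1}$ and Levi-Civita connection $\overline\nabla$. Let $\widetilde S\subset\mathbb R^n$ be a smooth closed embedded hypersurface contained in the open unit ball $B_1(0)\subset\mathbb R^n$ and bounding a domain $D$. The boundary cone is $\Sigma=\{l(x,1): l>0,\ x\in\widetilde S\}$ and the solid cone is $\mathcal C=\{l(x,1): l>0,\ x\in\overline D\}$. Let $\mu$ be the (spacelike) unit normal of $\Sigma$ pointing out of $\mathcal C$, and $A^\Sigma(X,Y)=\langle\overline\nabla_X\mu,Y\rangle$ the second fundamental form of $\Sigma$. A solution of mean curvature flow with perpendicular Neumann boundary condition on $\Sigma$ is a smooth map $\mathbf F:M^n\times[0,T)\to\mathbb R^{n+1}_1$, $M^n$ a compact smooth $n$-manifold with boundary, such that each $\mathbf F(\cdot,t)$ is a spacelike embedding (induced metric $g$ Riemannian) with image $M_t\subset\mathcal C$, and $\partial_t\mathbf F=H\nu$ on $M\times[0,T)$, $\mathbf F(\partial M,t)\subset\Sigma$ and $\langle\nu,\mu\rangle=0$ on $\partial M\times[0,T)$. Here $\nu$ is the future-directed timelike unit normal of $M_t$ ($\langle\nu,\nu\rangle=-1$, $\nu_{n+1}>0$),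 $A(X,Y)=\langle\overline\nabla_X\nu,Y\rangle$ is the second fundamental form of $M_t$, $H=\mathrm{tr}_gA$ is the mean curvature (so $\Delta_{M_t}\mathbf F=H\nu$), and $\nabla,\Delta,|\cdot|$ are taken with respect to $g$. Along $\partial M$ the vector $\mu$ is tangent to $M_t$. Set $F^2=-\langle\mathbf F,\mathbf F\rangle>0$, $F=\sqrt{F^2}$, and $S=-\langle\mathbf F,\nu\rangle$ (so $S\ge F>0$). *)

theory Defs
  imports "HOL-Analysis.Analysis"
begin

text \<open>Minkowski space R^{n+1}_1 is modelled as (real^'n) \<times> real; the last
  (time) coordinate is the second component.\<close>

type_synonym 'n pt = "(real^'n) \<times> real"

definition mink :: "'n::finite pt \<Rightarrow> 'n pt \<Rightarrow> real" where
  "mink p q = fst p \<bullet> fst q - snd p * snd q"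

fun Ck_on :: "nat \<Rightarrow> 'a::real_normed_vector set \<Rightarrow> ('a \<Rightarrow> 'b::real_normed_vector) \<Rightarrow> bool" where
  "Ck_on 0 W f = continuous_on W f"
| "Ck_on (Suc k) W f =
     (\<exists>f'. (\<forall>x\<in>W. (f has_derivative f' x) (at x)) \<and> (\<forall>v. Ck_on k W (\<lambda>x. f' x v)))"

definition smooth_on :: "'a::real_normed_vector set \<Rightarrow> ('a \<Rightarrow> 'b::real_normed_vector) \<Rightarrow> bool" where
  "smooth_on W f \<longleftrightarrow> (\<forall>k. Ck_on k W f)"

definition egrad :: "(real^'n::finite \<Rightarrow> real) \<Rightarrow> real^'n \<Rightarrow> real^'n" where
  "egrad \<phi> x = (\<chi> i. frechet_derivative \<phi> (at x) (axis i 1))"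

definition bcone :: "(real^'n::finite \<Rightarrow> real) \<Rightarrow> 'n pt set" where
  "bcone \<phi> = {(l *\<^sub>R x, l) | l x. l > 0 \<and> \<phi> x = 0}"

definition scone :: "(real^'n::finite \<Rightarrow> real) \<Rightarrow> 'n pt set" where
  "scone \<phi> = {(l *\<^sub>R x, l) | l x. l > 0 \<and> x \<in> closure {y. \<phi> y < 0}}"

text \<open>Outward (out of the solid cone) spacelike unit normal of the boundary cone
  at p = l(x,1): the normalised Minkowski gradient of (y,s) \<mapsto> phi(y/s).\<close>

definition cone_normal :: "(real^'n::finite \<Rightarrow> real) \<Rightarrow> 'n pt \<Rightarrow> 'n pt" where
  "cone_normal \<phi> p =
     (let x = fst p /\<^sub>R snd p;
          N = (egrad \<phi> x, egrad \<phi> x \<bullet> x)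
      in N /\<^sub>R sqrt (mink N N))"

text \<open>Quantities of the evolving hypersurface, in a local parametrisation
  F (u,t), u \<in> R^n (parameter), t time.\<close>

definition dX :: "('n::finite pt \<Rightarrow> 'n pt) \<Rightarrow> real^'n \<Rightarrow> real \<Rightarrow> 'n \<Rightarrow> 'n pt" where
  "dX F u t i = frechet_derivative (\<lambda>v. F (v, t)) (at u) (axis i 1)"

definition gmat :: "('n::finite pt \<Rightarrow> 'n pt) \<Rightarrow> real^'n \<Rightarrow> real \<Rightarrow> real^'n^'n" where
  "gmat F u t = (\<chi> i j. mink (dX F u t i) (dX F u t j))"

definition ginv :: "('n::finite pt \<Rightarrow> 'n pt) \<Rightarrow> real^'n \<Rightarrow> real \<Rightarrow> real^'n^'n" where
  "ginv F u t = matrix_inv (gmat F u t)"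

definition nu :: "('n::finite pt \<Rightarrow> 'n pt) \<Rightarrow> real^'n \<Rightarrow> real \<Rightarrow> 'n pt" where
  "nu F u t = (THE n. (\<forall>i. mink n (dX F u t i) = 0) \<and> mink n n = -1 \<and> snd n > 0)"

definition sff :: "('n::finite pt \<Rightarrow> 'n pt) \<Rightarrow> real^'n \<Rightarrow> real \<Rightarrow> 'n \<Rightarrow> 'n \<Rightarrow> real" where
  "sff F u t i j = mink (frechet_derivative (\<lambda>v. nu F v t) (at u) (axis i 1)) (dX F u t j)"

definition mcurv :: "('n::finite pt \<Rightarrow> 'n pt) \<Rightarrow> real^'n \<Rightarrow> real \<Rightarrow> real" where
  "mcurv F u t = (\<Sum>i\<in>UNIV. \<Sum>j\<in>UNIV. ginv F u t $ i $ j * sff F u t i j)"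

definition Sfun :: "('n::finite pt \<Rightarrow> 'n pt) \<Rightarrow> real^'n \<Rightarrow> real \<Rightarrow> real" where
  "Sfun F u t = - mink (F (u, t)) (nu F u t)"

definition mgrad :: "('n::finite pt \<Rightarrow> 'n pt) \<Rightarrow> real \<Rightarrow> (real^'n \<Rightarrow> real) \<Rightarrow> real^'n \<Rightarrow> 'n pt" where
  "mgrad F t f u = (\<Sum>i\<in>UNIV. \<Sum>j\<in>UNIV.
      (ginv F u t $ i $ j * frechet_derivative f (at u) (axis j 1)) *\<^sub>R dX F u t i)"

end

theory Submission
  imports Defs
begin


lemma CkI: "(\<forall>x\<in>S. (f has_derivative f' x) (at x)) \<Longrightarrow> (\<forall>v. Ck_on k S (\<lambda>x. f' x v)) \<Longrightarrow> Ck_on (Suc k) S f"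
  by (simp only: Ck_on.simps(2)) (rule exI[of _ f'], blast)

lemma Ck_subset: "Ck_on k S f \<Longrightarrow> T \<subseteq> S \<Longrightarrow> Ck_on k T f"
proof (induction k arbitrary: f)
  case 0 then show ?case by (auto intro: continuous_on_subset)
next
  case (Suc k)
  then obtain f' where d: "\<forall>x\<in>S. (f has_derivative f' x) (at x)" "\<forall>v. Ck_on k S (\<lambda>x. f' x v)"
    by auto
  then have "\<forall>x\<in>T. (f has_derivative f' x) (at x)" "\<forall>v. Ck_on k T (\<lambda>x. f' x v)"
    using Suc by auto
  then show ?case by (rule CkI)
qed

lemma Ck_Suc_imp: "Ck_on (Suc k) S f \<Longrightarrow> Ck_on k S f"
proof (induction k arbitrary: f)
  case 0
  then obtain f' where "\<forall>x\<in>S. (f has_derivative f' x) (at x)" by auto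
  then show ?case
    by (auto intro!: continuous_at_imp_continuous_on has_derivative_continuous)
next
  case (Suc k)
  then obtain f' where d: "\<forall>x\<in>S. (f has_derivative f' x) (at x)" "\<forall>v. Ck_on (Suc k) S (\<lambda>x. f' x v)"
    by (metis Ck_on.simps(2))
  then have "\<forall>v. Ck_on k S (\<lambda>x. f' x v)" using Suc.IH by blast
  with d(1) show ?case by (rule CkI)
qed

lemma Ck_cong: "open S \<Longrightarrow> (\<And>x. x \<in> S \<Longrightarrow> f x = g x) \<Longrightarrow> Ck_on k S f \<Longrightarrow> Ck_on k S g"
proof (cases k)
  case 0
  assume "(\<And>x. x \<in> S \<Longrightarrow> f x = g x)" "Ck_on k S f"
  then show ?thesis using 0 continuous_on_cong[of S S f g] by simp
next
  case (Suc m)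
  assume o: "open S" and e: "(\<And>x. x \<in> S \<Longrightarrow> f x = g x)" and c: "Ck_on k S f"
  then obtain f' where d: "\<forall>x\<in>S. (f has_derivative f' x) (at x)" "\<forall>v. Ck_on m S (\<lambda>x. f' x v)"
    using Suc by auto
  have "\<forall>x\<in>S. (g has_derivative f' x) (at x)"
    using d(1) o e has_derivative_transform_within_open[of f _ x UNIV S g for x] by blast
  then show ?thesis using d(2) unfolding Suc by (rule CkI)
qed

lemma Ck_const: "Ck_on k S (\<lambda>x. c)"
proof (induction k arbitrary: c)
  case 0 then show ?case by simp
next
  case (Suc k)
  have d: "\<forall>x\<in>S. ((\<lambda>x. c) has_derivative (\<lambda>v. 0)) (at x)" by simp
  show ?case by (rule CkI[OF d]) (simp add: Suc.IH)
qed

lemma Ck_linear: "bounded_linear L \<Longrightarrow> Ck_on k S f \<Longrightarrow> Ck_on k S (\<lambda>x. L (f x))"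
proof (induction k arbitrary: f)
  case 0 then show ?case by (auto intro: bounded_linear.continuous_on)
next
  case (Suc k)
  then obtain f' where d: "\<forall>x\<in>S. (f has_derivative f' x) (at x)" "\<forall>v. Ck_on k S (\<lambda>x. f' x v)"
    by auto
  have "\<forall>x\<in>S. ((\<lambda>x. L (f x)) has_derivative (\<lambda>v. L (f' x v))) (at x)"
    using d(1) Suc.prems(1) bounded_linear.has_derivative by blast
  moreover have "\<forall>v. Ck_on k S (\<lambda>x. L (f' x v))" using d(2) Suc by blast
  ultimately show ?case by (rule CkI)
qed

lemma Ck_add: "Ck_on k S f \<Longrightarrow> Ck_on k S g \<Longrightarrow> Ck_on k S (\<lambda>x. f x + g x)"
proof (induction k arbitrary: f g)
  case 0 then show ?case by (auto intro: continuous_on_add)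
next
  case (Suc k)
  then obtain f' g' where d: "\<forall>x\<in>S. (f has_derivative f' x) (at x)" "\<forall>v. Ck_on k S (\<lambda>x. f' x v)"
    "\<forall>x\<in>S. (g has_derivative g' x) (at x)" "\<forall>v. Ck_on k S (\<lambda>x. g' x v)"
    by auto
  have "\<forall>x\<in>S. ((\<lambda>x. f x + g x) has_derivative (\<lambda>v. f' x v + g' x v)) (at x)"
    using d by (auto intro: has_derivative_add)
  moreover have "\<forall>v. Ck_on k S (\<lambda>x. f' x v + g' x v)" using d Suc by blast
  ultimately show ?case by (rule CkI)
qed

lemma Ck_bilinear: "bounded_bilinear b \<Longrightarrow> Ck_on k S f \<Longrightarrow> Ck_on k S g \<Longrightarrow> Ck_on k S (\<lambda>x. b (f x) (g x))"
proof (induction k arbitrary: f g)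
  case 0 then show ?case by (auto intro: bounded_bilinear.continuous_on)
next
  case (Suc k)
  then obtain f' g' where d: "\<forall>x\<in>S. (f has_derivative f' x) (at x)" "\<forall>v. Ck_on k S (\<lambda>x. f' x v)"
    "\<forall>x\<in>S. (g has_derivative g' x) (at x)" "\<forall>v. Ck_on k S (\<lambda>x. g' x v)"
    by auto
  have "\<forall>x\<in>S. ((\<lambda>x. b (f x) (g x)) has_derivative (\<lambda>v. b (f x) (g' x v) + b (f' x v) (g x))) (at x)"
    using d Suc.prems(1) by (auto intro: bounded_bilinear.FDERIV)
  moreover have "\<forall>v. Ck_on k S (\<lambda>x. b (f x) (g' x v) + b (f' x v) (g x))"
  proof
    fix v
    have "Ck_on k S f" "Ck_on k S g" using Suc.prems Ck_Suc_imp by blast+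
    then show "Ck_on k S (\<lambda>x. b (f x) (g' x v) + b (f' x v) (g x))"
      using d Suc.IH Suc.prems(1) by (intro Ck_add) auto
  qed
  ultimately show ?case by (rule CkI)
qed

lemma Ck_sum: "finite I \<Longrightarrow> (\<And>i. i \<in> I \<Longrightarrow> Ck_on k S (f i)) \<Longrightarrow> Ck_on k S (\<lambda>x. \<Sum>i\<in>I. f i x)"
proof (induction I rule: finite_induct)
  case empty then show ?case by (simp add: Ck_const)
next
  case (insert a I)
  have "Ck_on k S (\<lambda>x. f a x + (\<Sum>i\<in>I. f i x))"
    using insert by (intro Ck_add) auto
  then show ?case using insert(1,2) by simp
qed

lemma Ck_prod: "finite I \<Longrightarrow> (\<And>i. i \<in> I \<Longrightarrow> Ck_on k S (f i)) \<Longrightarrow> Ck_on k S (\<lambda>x. \<Prod>i\<in>I. (f i x::real))"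
proof (induction I rule: finite_induct)
  case empty then show ?case by (simp add: Ck_const)
next
  case (insert a I)
  have "Ck_on k S (\<lambda>x. f a x * (\<Prod>i\<in>I. f i x))"
    using insert by (intro Ck_bilinear[OF bounded_bilinear_mult]) auto
  then show ?case using insert(1,2) by simp
qed



lemma bl_expand:
  fixes L :: "'b::euclidean_space \<Rightarrow> 'c::real_normed_vector"
  assumes "bounded_linear L"
  shows "L w = (\<Sum>b\<in>Basis. (w \<bullet> b) *\<^sub>R L b)"
proof -
  have "(\<Sum>b\<in>Basis. (w \<bullet> b) *\<^sub>R L b) = L (\<Sum>b\<in>Basis. (w \<bullet> b) *\<^sub>R b)"
    by (simp add: linear_sum bounded_linear.linear assms linear_simps)
  then show ?thesis by (simp add: euclidean_representation)
qed

lemma Ck_compose: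
  fixes g :: "'b::euclidean_space \<Rightarrow> 'c::real_normed_vector" and f :: "'a::real_normed_vector \<Rightarrow> 'b"
  assumes "open S" "open T"
  shows "Ck_on k T g \<Longrightarrow> Ck_on k S f \<Longrightarrow> f ` S \<subseteq> T \<Longrightarrow> Ck_on k S (\<lambda>x. g (f x))"
proof (induction k arbitrary: g f)
  case 0 then show ?case by (auto intro: continuous_on_compose2)
next
  case (Suc k)
  from Suc.prems(1) obtain g' where g: "\<forall>y\<in>T. (g has_derivative g' y) (at y)" "\<forall>v. Ck_on k T (\<lambda>y. g' y v)"
    by auto
  from Suc.prems(2) obtain f' where f: "\<forall>x\<in>S. (f has_derivative f' x) (at x)" "\<forall>v. Ck_on k S (\<lambda>x. f' x v)"
    by auto
  have d: "\<forall>x\<in>S. ((\<lambda>x. g (f x)) has_derivative (\<lambda>v. g' (f x) (f' x v))) (at x)"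
  proof
    fix x assume x: "x \<in> S"
    have "((g \<circ> f) has_derivative (g' (f x) \<circ> f' x)) (at x)"
      using x f(1) g(1) Suc.prems(3) by (intro diff_chain_at) auto
    then show "((\<lambda>x. g (f x)) has_derivative (\<lambda>v. g' (f x) (f' x v))) (at x)"
      by (simp add: o_def)
  qed
  have "Ck_on k S (\<lambda>x. g' (f x) (f' x v))" for v
  proof -
    have fk: "Ck_on k S f" using Suc.prems(2) Ck_Suc_imp by blast
    have "Ck_on k S (\<lambda>x. \<Sum>b\<in>Basis. (f' x v \<bullet> b) *\<^sub>R g' (f x) b)"
    proof (rule Ck_sum)
      fix b :: 'b assume "b \<in> Basis"
      have a: "Ck_on k S (\<lambda>x. f' x v \<bullet> b)"
        using f(2) by (intro Ck_linear[OF bounded_linear_inner_left]) auto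
      have c: "Ck_on k S (\<lambda>x. g' (f x) b)"
        using Suc.IH[of "\<lambda>y. g' y b" f] g(2) fk Suc.prems(3) by blast
      show "Ck_on k S (\<lambda>x. (f' x v \<bullet> b) *\<^sub>R g' (f x) b)"
        using Ck_bilinear[OF bounded_bilinear_scaleR a c] .
    qed simp
    then show ?thesis
    proof (rule Ck_cong[OF assms(1), rotated])
      fix x assume x: "x \<in> S"
      then have "bounded_linear (g' (f x))" using g(1) Suc.prems(3)
        by (meson has_derivative_bounded_linear image_subset_iff)
      then show "(\<Sum>b\<in>Basis. (f' x v \<bullet> b) *\<^sub>R g' (f x) b) = g' (f x) (f' x v)"
        using bl_expand by metis
    qed
  qed
  then show ?case using d by (intro CkI) auto
qed

lemma Ck_inverse: "Ck_on k {x::real. x \<noteq> 0} inverse"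
proof (induction k)
  case 0 then show ?case by (auto intro!: continuous_on_inverse continuous_on_id)
next
  case (Suc k)
  have d: "\<forall>x\<in>{x::real. x \<noteq> 0}. (inverse has_derivative (\<lambda>v. - (inverse x * v * inverse x))) (at x)"
    by (auto intro: has_derivative_inverse')
  have "Ck_on k {x::real. x \<noteq> 0} (\<lambda>x. - (inverse x * v * inverse x))" for v
  proof -
    have "Ck_on k {x::real. x \<noteq> 0} (\<lambda>x. (-v) * (inverse x * inverse x))"
      by (intro Ck_bilinear[OF bounded_bilinear_mult] Ck_const Suc)
    then show ?thesis by (rule Ck_cong[rotated 2]) (auto simp: open_Collect_neq)
  qed
  then show ?case using d by (intro CkI) auto
qed

lemma Ck_sqrt: "Ck_on k {x::real. x > 0} sqrt"
proof (induction k)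
  case 0 then show ?case by (auto intro!: continuous_on_real_sqrt continuous_on_id)
next
  case (Suc k)
  have d: "\<forall>x\<in>{x::real. x > 0}. (sqrt has_derivative (\<lambda>v. v * (inverse (sqrt x) / 2))) (at x)"
    by (auto intro!: DERIV_real_sqrt[THEN DERIV_compose_FDERIV[where g="\<lambda>x. x", OF _ has_derivative_ident], simplified])
  have "Ck_on k {x::real. x > 0} (\<lambda>x. v * (inverse (sqrt x) / 2))" for v
  proof -
    have "Ck_on k {x::real. x > 0} (\<lambda>x. inverse (sqrt x))"
      by (rule Ck_compose[OF _ _ Ck_inverse Suc]) (auto simp: open_Collect_neq open_Collect_less)
    then have "Ck_on k {x::real. x > 0} (\<lambda>x. (v/2) * inverse (sqrt x))"
      by (intro Ck_bilinear[OF bounded_bilinear_mult] Ck_const)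
    then show ?thesis by (rule Ck_cong[rotated 2]) (auto simp: open_Collect_less)
  qed
  then show ?case using d by (intro CkI) auto
qed



lemma sm_Ck: "smooth_on S f \<Longrightarrow> Ck_on k S f" by (simp add: smooth_on_def)

lemma sm_const: "smooth_on S (\<lambda>x. c)" by (simp add: smooth_on_def Ck_const)

lemma sm_add: "smooth_on S f \<Longrightarrow> smooth_on S g \<Longrightarrow> smooth_on S (\<lambda>x. f x + g x)"
  by (simp add: smooth_on_def Ck_add)

lemma sm_linear: "bounded_linear L \<Longrightarrow> smooth_on S f \<Longrightarrow> smooth_on S (\<lambda>x. L (f x))"
  by (simp add: smooth_on_def Ck_linear)

lemma sm_bilinear: "bounded_bilinear b \<Longrightarrow> smooth_on S f \<Longrightarrow> smooth_on S g \<Longrightarrow> smooth_on S (\<lambda>x. b (f x) (g x))"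
  by (simp add: smooth_on_def Ck_bilinear)

lemma sm_id: "smooth_on S (\<lambda>x. x)"
  unfolding smooth_on_def
proof -
  have "Ck_on k S (\<lambda>x. x)" for k
  proof (induction k)
    case 0 then show ?case by (simp add: continuous_on_id)
  next
    case (Suc k)
    have "\<forall>x\<in>S. ((\<lambda>x. x) has_derivative (\<lambda>v. v)) (at x)" by simp
    then show ?case by (rule CkI) (simp add: Ck_const)
  qed
  then show "\<forall>k. Ck_on k S (\<lambda>x. x)" by blast
qed

lemma sm_subset: "smooth_on S f \<Longrightarrow> T \<subseteq> S \<Longrightarrow> smooth_on T f"
  using Ck_subset by (metis smooth_on_def)

lemma sm_cong: "open S \<Longrightarrow> (\<And>x. x \<in> S \<Longrightarrow> f x = g x) \<Longrightarrow> smooth_on S f \<Longrightarrow> smooth_on S g"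
  using Ck_cong by (metis smooth_on_def)

lemma sm_sum: "finite I \<Longrightarrow> (\<And>i. i \<in> I \<Longrightarrow> smooth_on S (f i)) \<Longrightarrow> smooth_on S (\<lambda>x. \<Sum>i\<in>I. f i x)"
  by (simp add: smooth_on_def Ck_sum)

lemma sm_prod: "finite I \<Longrightarrow> (\<And>i. i \<in> I \<Longrightarrow> smooth_on S (f i)) \<Longrightarrow> smooth_on S (\<lambda>x. \<Prod>i\<in>I. (f i x::real))"
  by (simp add: smooth_on_def Ck_prod)

lemma sm_compose:
  fixes g :: "'b::euclidean_space \<Rightarrow> 'c::real_normed_vector" and f :: "'a::real_normed_vector \<Rightarrow> 'b"
  shows "open S \<Longrightarrow> open T \<Longrightarrow> smooth_on T g \<Longrightarrow> smooth_on S f \<Longrightarrow> f ` S \<subseteq> T \<Longrightarrow> smooth_on S (\<lambda>x. g (f x))"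
  by (simp add: smooth_on_def Ck_compose)

lemma sm_mult: "smooth_on S f \<Longrightarrow> smooth_on S g \<Longrightarrow> smooth_on S (\<lambda>x. (f x::real) * g x)"
  by (rule sm_bilinear[OF bounded_bilinear_mult])

lemma sm_scaleR: "smooth_on S f \<Longrightarrow> smooth_on S g \<Longrightarrow> smooth_on S (\<lambda>x. f x *\<^sub>R g x)"
  by (rule sm_bilinear[OF bounded_bilinear_scaleR])

lemma sm_inner: "smooth_on S f \<Longrightarrow> smooth_on S g \<Longrightarrow> smooth_on S (\<lambda>x. f x \<bullet> g x)"
  by (rule sm_bilinear[OF bounded_bilinear_inner])

lemma sm_minus: "smooth_on S f \<Longrightarrow> smooth_on S (\<lambda>x. - f x)"
  using sm_linear[OF bounded_linear_minus[OF bounded_linear_ident]] by blast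

lemma sm_diff: "smooth_on S f \<Longrightarrow> smooth_on S g \<Longrightarrow> smooth_on S (\<lambda>x. f x - g x)"
proof -
  assume "smooth_on S f" "smooth_on S g"
  then have "smooth_on S (\<lambda>x. f x + - g x)" by (intro sm_add sm_minus)
  then show ?thesis by simp
qed

lemma sm_fst: "smooth_on S f \<Longrightarrow> smooth_on S (\<lambda>x. fst (f x))"
  by (rule sm_linear[OF bounded_linear_fst])

lemma sm_snd: "smooth_on S f \<Longrightarrow> smooth_on S (\<lambda>x. snd (f x))"
  by (rule sm_linear[OF bounded_linear_snd])

lemma sm_nth: "smooth_on S f \<Longrightarrow> smooth_on S (\<lambda>x. f x $ i)"
  by (rule sm_linear[OF bounded_linear_vec_nth])

lemma sm_Pair: "smooth_on S f \<Longrightarrow> smooth_on S g \<Longrightarrow> smooth_on S (\<lambda>x. (f x, g x))"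
proof -
  assume f: "smooth_on S f" and g: "smooth_on S g"
  have "smooth_on S (\<lambda>x. (f x, 0) + (0, g x))"
    by (intro sm_add sm_linear[OF bounded_linear_Pair[OF bounded_linear_ident bounded_linear_zero] f]
        sm_linear[OF bounded_linear_Pair[OF bounded_linear_zero bounded_linear_ident] g])
  then show ?thesis by simp
qed

lemma sm_vec:
  fixes f :: "'n::finite \<Rightarrow> 'a::real_normed_vector \<Rightarrow> real"
  shows "(\<And>i. smooth_on S (f i)) \<Longrightarrow> smooth_on S (\<lambda>x. \<chi> i. f i x)"
proof -
  assume f: "\<And>i. smooth_on S (f i)"
  have "smooth_on S (\<lambda>x. \<Sum>i\<in>UNIV. f i x *\<^sub>R (axis i 1 :: real^'n))"
    by (intro sm_sum sm_scaleR f sm_const) auto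
  moreover have "(\<Sum>i\<in>UNIV. f i x *\<^sub>R (axis i 1 :: real^'n)) = (\<chi> i. f i x)" for x
    by (simp add: vec_eq_iff axis_def if_distrib cong: if_cong)
  ultimately show ?thesis by simp
qed

lemma sm_mink: "smooth_on S f \<Longrightarrow> smooth_on S g \<Longrightarrow> smooth_on S (\<lambda>x. mink (f x) (g x))"
  unfolding mink_def by (intro sm_diff sm_inner sm_mult sm_fst sm_snd)

lemma sm_det: "(\<And>i j. smooth_on S (\<lambda>x. A x $ i $ j)) \<Longrightarrow> smooth_on S (\<lambda>x. det (A x :: real^'n^'n))"
  unfolding det_def by (intro sm_sum sm_mult sm_const sm_prod) auto

lemma sm_inverse: "open S \<Longrightarrow> smooth_on S f \<Longrightarrow> (\<And>x. x \<in> S \<Longrightarrow> f x \<noteq> 0) \<Longrightarrow> smooth_on S (\<lambda>x. inverse (f x :: real))"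
  by (rule sm_compose[where T="{x. x \<noteq> 0}"]) (auto simp: smooth_on_def Ck_inverse open_Collect_neq)

lemma sm_divide: "open S \<Longrightarrow> smooth_on S f \<Longrightarrow> smooth_on S g \<Longrightarrow> (\<And>x. x \<in> S \<Longrightarrow> g x \<noteq> 0) \<Longrightarrow> smooth_on S (\<lambda>x. f x / (g x :: real))"
  unfolding divide_inverse by (intro sm_mult sm_inverse)

lemma sm_sqrt: "open S \<Longrightarrow> smooth_on S f \<Longrightarrow> (\<And>x. x \<in> S \<Longrightarrow> f x > 0) \<Longrightarrow> smooth_on S (\<lambda>x. sqrt (f x))"
  by (rule sm_compose[where T="{x. x > 0}"]) (auto simp: smooth_on_def Ck_sqrt open_Collect_less)

lemma sm_continuous: "smooth_on S f \<Longrightarrow> continuous_on S f"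
  using sm_Ck[of S f 0] by simp

lemma sm_deriv:
  assumes "open S" "smooth_on S f" "x \<in> S"
  shows "(f has_derivative frechet_derivative f (at x)) (at x)"
proof -
  from sm_Ck[OF assms(2), of 1] obtain f' where "\<forall>x\<in>S. (f has_derivative f' x) (at x)" by auto
  then show ?thesis using assms(3) frechet_derivative_at by metis
qed

lemma sm_deriv_sm:
  assumes "open S" "smooth_on S f"
  shows "smooth_on S (\<lambda>x. frechet_derivative f (at x) v)"
  unfolding smooth_on_def
proof
  fix k
  from sm_Ck[OF assms(2), of "Suc k"] obtain f' where
    d: "\<forall>x\<in>S. (f has_derivative f' x) (at x)" "\<forall>v. Ck_on k S (\<lambda>x. f' x v)" by auto
  show "Ck_on k S (\<lambda>x. frechet_derivative f (at x) v)"
    by (rule Ck_cong[OF assms(1) _ d(2)[rule_format, of v]]) (use d(1) frechet_derivative_at in metis)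
qed

lemma sm_differentiable: "open S \<Longrightarrow> smooth_on S f \<Longrightarrow> x \<in> S \<Longrightarrow> f differentiable (at x)"
  using sm_deriv differentiableI by blast



lemma schwarz_step:
  fixes f :: "'a::real_normed_vector \<Rightarrow> real"
  assumes f': "\<And>y. y \<in> S \<Longrightarrow> (f has_derivative f' y) (at y)"
    and s: "s > 0"
    and inS: "\<And>\<tau>. 0 \<le> \<tau> \<Longrightarrow> \<tau> \<le> s \<Longrightarrow> x + \<tau> *\<^sub>R a + s *\<^sub>R b \<in> S \<and> x + \<tau> *\<^sub>R a \<in> S"
    and est: "\<And>y. norm (y - x) < d \<Longrightarrow> \<bar>f' y a - f' x a - Da (y - x)\<bar> \<le> e * norm (y - x)"
    and sd: "s * (norm a + norm b) < d"
    and Da: "linear Da" and e: "e \<ge> 0"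
  shows "\<bar>(f (x + s *\<^sub>R a + s *\<^sub>R b) - f (x + s *\<^sub>R a)) - (f (x + s *\<^sub>R b) - f x) - s\<^sup>2 * Da b\<bar>
           \<le> 2 * e * s\<^sup>2 * (norm a + norm b)"
proof -
  define \<phi> where "\<phi> \<tau> = f (x + \<tau> *\<^sub>R a + s *\<^sub>R b) - f (x + \<tau> *\<^sub>R a)" for \<tau>
  define ga where "ga y = f' y a" for y
  have lin: "f' y (h *\<^sub>R a) = h * f' y a" if "y \<in> S" for y h
  proof -
    have "linear (f' y)" using f'[OF that] has_derivative_bounded_linear bounded_linear.linear by blast
    then show ?thesis by (simp add: linear_cmul)
  qed
  have der: "(\<phi> has_derivative (\<lambda>h. h * (ga (x + \<tau> *\<^sub>R a + s *\<^sub>R b) - ga (x + \<tau> *\<^sub>R a)))) (at \<tau> within {0..s})"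
    if "0 \<le> \<tau>" "\<tau> \<le> s" for \<tau>
  proof -
    have a1: "((\<lambda>t. x + t *\<^sub>R a + s *\<^sub>R b) has_derivative (\<lambda>h. h *\<^sub>R a)) (at \<tau>)"
      by (auto intro!: derivative_eq_intros)
    have a2: "((\<lambda>t. x + t *\<^sub>R a) has_derivative (\<lambda>h. h *\<^sub>R a)) (at \<tau>)"
      by (auto intro!: derivative_eq_intros)
    have p1: "x + \<tau> *\<^sub>R a + s *\<^sub>R b \<in> S" and p2: "x + \<tau> *\<^sub>R a \<in> S" using inS that by auto
    have c1: "((\<lambda>t. f (x + t *\<^sub>R a + s *\<^sub>R b)) has_derivative (\<lambda>h. f' (x + \<tau> *\<^sub>R a + s *\<^sub>R b) (h *\<^sub>R a))) (at \<tau>)"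
      using diff_chain_at[OF a1 f'[OF p1]] by (simp add: o_def)
    have c2: "((\<lambda>t. f (x + t *\<^sub>R a)) has_derivative (\<lambda>h. f' (x + \<tau> *\<^sub>R a) (h *\<^sub>R a))) (at \<tau>)"
      using diff_chain_at[OF a2 f'[OF p2]] by (simp add: o_def)
    have "(\<phi> has_derivative (\<lambda>h. f' (x + \<tau> *\<^sub>R a + s *\<^sub>R b) (h *\<^sub>R a) - f' (x + \<tau> *\<^sub>R a) (h *\<^sub>R a))) (at \<tau>)"
      unfolding \<phi>_def by (rule has_derivative_diff[OF c1 c2])
    then have "(\<phi> has_derivative (\<lambda>h. h * (ga (x + \<tau> *\<^sub>R a + s *\<^sub>R b) - ga (x + \<tau> *\<^sub>R a)))) (at \<tau>)"
      by (simp add: lin[OF p1] lin[OF p2] ga_def right_diff_distrib)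
    then show ?thesis by (rule has_derivative_at_withinI)
  qed
  obtain \<xi> where \<xi>: "\<xi> \<in> {0<..<s}" "\<phi> s - \<phi> 0 = (s - 0) * (ga (x + \<xi> *\<^sub>R a + s *\<^sub>R b) - ga (x + \<xi> *\<^sub>R a))"
    using mvt_simple[OF s der] by auto
  define p1 where "p1 = x + \<xi> *\<^sub>R a + s *\<^sub>R b"
  define p2 where "p2 = x + \<xi> *\<^sub>R a"
  have n1: "norm (p1 - x) \<le> s * (norm a + norm b)"
  proof -
    have "norm (p1 - x) = norm (\<xi> *\<^sub>R a + s *\<^sub>R b)" by (simp add: p1_def)
    also have "\<dots> \<le> norm (\<xi> *\<^sub>R a) + norm (s *\<^sub>R b)" by (rule norm_triangle_ineq)
    also have "\<dots> = \<xi> * norm a + s * norm b" using \<xi>(1) s by simp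
    also have "\<dots> \<le> s * (norm a + norm b)" using \<xi>(1)
      by (simp add: distrib_left mult_right_mono)
    finally show ?thesis .
  qed
  have n2: "norm (p2 - x) \<le> s * (norm a + norm b)"
  proof -
    have "norm (p2 - x) = \<xi> * norm a" using \<xi>(1) by (simp add: p2_def)
    also have "\<dots> \<le> s * (norm a + norm b)" using \<xi>(1)
      by (simp add: distrib_left mult_right_mono add_increasing2)
    finally show ?thesis .
  qed
  have "norm (p1 - x) < d" using n1 sd by linarith
  then have e1: "\<bar>ga p1 - ga x - Da (p1 - x)\<bar> \<le> e * norm (p1 - x)"
    unfolding ga_def by (rule est)
  have "norm (p2 - x) < d" using n2 sd by linarith
  then have e2: "\<bar>ga p2 - ga x - Da (p2 - x)\<bar> \<le> e * norm (p2 - x)"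
    unfolding ga_def by (rule est)
  have Dd: "Da (p1 - x) - Da (p2 - x) = s * Da b"
  proof -
    have "Da (p1 - x) - Da (p2 - x) = Da ((p1 - x) - (p2 - x))" using Da by (simp add: linear_diff)
    also have "(p1 - x) - (p2 - x) = s *\<^sub>R b" by (simp add: p1_def p2_def)
    finally show ?thesis using Da by (simp add: linear_cmul)
  qed
  have "ga p1 - ga p2 - s * Da b = (ga p1 - ga x - Da (p1 - x)) - (ga p2 - ga x - Da (p2 - x))"
    using Dd by simp
  then have "\<bar>ga p1 - ga p2 - s * Da b\<bar> \<le> e * norm (p1 - x) + e * norm (p2 - x)"
    using e1 e2 by linarith
  also have "\<dots> \<le> 2 * e * (s * (norm a + norm b))"
  proof -
    have "e * norm (p1 - x) \<le> e * (s * (norm a + norm b))" using n1 e by (rule mult_left_mono)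
    moreover have "e * norm (p2 - x) \<le> e * (s * (norm a + norm b))" using n2 e by (rule mult_left_mono)
    ultimately show ?thesis by linarith
  qed
  finally have B: "\<bar>ga p1 - ga p2 - s * Da b\<bar> \<le> 2 * e * (s * (norm a + norm b))" .
  have "(f (x + s *\<^sub>R a + s *\<^sub>R b) - f (x + s *\<^sub>R a)) - (f (x + s *\<^sub>R b) - f x) - s\<^sup>2 * Da b
        = s * (ga p1 - ga p2 - s * Da b)"
    using \<xi>(2) by (simp add: \<phi>_def p1_def p2_def power2_eq_square algebra_simps)
  then have "\<bar>(f (x + s *\<^sub>R a + s *\<^sub>R b) - f (x + s *\<^sub>R a)) - (f (x + s *\<^sub>R b) - f x) - s\<^sup>2 * Da b\<bar>
      = s * \<bar>ga p1 - ga p2 - s * Da b\<bar>" using s by (simp add: abs_mult)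
  also have "\<dots> \<le> s * (2 * e * (s * (norm a + norm b)))" using B s by (simp add: mult_left_mono)
  finally show ?thesis by (simp add: power2_eq_square algebra_simps)
qed

lemma schwarz_real:
  fixes f :: "'a::real_normed_vector \<Rightarrow> real"
  assumes S: "open S" "x \<in> S"
    and f': "\<And>y. y \<in> S \<Longrightarrow> (f has_derivative f' y) (at y)"
    and Da: "((\<lambda>y. f' y a) has_derivative Da) (at x)"
    and Db: "((\<lambda>y. f' y b) has_derivative Db) (at x)"
  shows "Da b = Db a"
proof -
  define K where "K = norm a + norm b"
  have K0: "K \<ge> 0" by (simp add: K_def)
  have linDa: "linear Da" using Da has_derivative_bounded_linear bounded_linear.linear by blast
  have linDb: "linear Db" using Db has_derivative_bounded_linear bounded_linear.linear by blast
  have main: "\<bar>Da b - Db a\<bar> \<le> 4 * e * K" if e: "e > 0" for e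
  proof -
    obtain d1 where d1: "d1 > 0" "\<And>y. norm (y - x) < d1 \<Longrightarrow> norm (f' y a - f' x a - Da (y - x)) \<le> e * norm (y - x)"
      using Da e unfolding has_derivative_at_alt by blast
    obtain d2 where d2: "d2 > 0" "\<And>y. norm (y - x) < d2 \<Longrightarrow> norm (f' y b - f' x b - Db (y - x)) \<le> e * norm (y - x)"
      using Db e unfolding has_derivative_at_alt by blast
    obtain r where r: "r > 0" "ball x r \<subseteq> S" using S open_contains_ball by blast
    define m where "m = min (min d1 d2) r"
    have m0: "m > 0" using d1 d2 r by (simp add: m_def)
    define s where "s = m / (2 * (K + 1))"
    have s0: "s > 0" using m0 K0 by (simp add: s_def)
    have sK: "s * K < m"
    proof -
      have "s * K \<le> s * (K + 1)" using s0 by simp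
      also have "s * (K + 1) = m / 2"
      proof -
        have "K + 1 \<noteq> 0" using K0 by simp
        then show ?thesis unfolding s_def by (simp add: field_simps)
      qed
      finally show ?thesis using m0 by linarith
    qed
    have inS: "x + \<tau> *\<^sub>R u + s *\<^sub>R v \<in> S \<and> x + \<tau> *\<^sub>R u \<in> S"
      if "0 \<le> \<tau>" "\<tau> \<le> s" "norm u + norm v = K" for \<tau> u v
    proof -
      have nu: "norm u \<le> K" "norm v \<le> K" using that(3) by auto
      have "norm (\<tau> *\<^sub>R u + s *\<^sub>R v) \<le> norm (\<tau> *\<^sub>R u) + norm (s *\<^sub>R v)" by (rule norm_triangle_ineq)
      also have "\<dots> = \<tau> * norm u + s * norm v" using that(1) s0 by simp
      also have "\<dots> \<le> s * norm u + s * norm v" using that(2) by (simp add: mult_right_mono)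
      also have "\<dots> = s * K" using that(3) distrib_left[of s "norm u" "norm v"] by simp
      finally have a1: "norm (\<tau> *\<^sub>R u + s *\<^sub>R v) < r" using sK m0 by (simp add: m_def)
      have "norm (\<tau> *\<^sub>R u) = \<tau> * norm u" using that(1) by simp
      also have "\<dots> \<le> s * K" using that(1,2) nu(1) s0 mult_mono[of \<tau> s "norm u" K] K0 by simp
      finally have a2: "norm (\<tau> *\<^sub>R u) < r" using sK m0 by (simp add: m_def)
      have "norm (- (\<tau> *\<^sub>R u) - s *\<^sub>R v) = norm (\<tau> *\<^sub>R u + s *\<^sub>R v)"
        by (metis minus_add_distrib norm_minus_cancel diff_conv_add_uminus)
      then have "x + \<tau> *\<^sub>R u + s *\<^sub>R v \<in> ball x r" using a1 by (simp add: dist_norm add.assoc)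
      moreover have "x + \<tau> *\<^sub>R u \<in> ball x r" using a2 by (simp add: dist_norm)
      ultimately show ?thesis using r(2) by blast
    qed
    have sd1: "s * (norm a + norm b) < d1" using sK by (simp add: K_def m_def)
    have sd2: "s * (norm b + norm a) < d2" using sK by (simp add: K_def m_def add.commute)
    have A: "\<bar>(f (x + s *\<^sub>R a + s *\<^sub>R b) - f (x + s *\<^sub>R a)) - (f (x + s *\<^sub>R b) - f x) - s\<^sup>2 * Da b\<bar>
           \<le> 2 * e * s\<^sup>2 * (norm a + norm b)"
      by (rule schwarz_step[OF f' s0 _ _ sd1 linDa]) (use inS K_def d1(2) e in auto)
    have B: "\<bar>(f (x + s *\<^sub>R b + s *\<^sub>R a) - f (x + s *\<^sub>R b)) - (f (x + s *\<^sub>R a) - f x) - s\<^sup>2 * Db a\<bar>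
           \<le> 2 * e * s\<^sup>2 * (norm b + norm a)"
      by (rule schwarz_step[OF f' s0 _ _ sd2 linDb]) (use inS K_def d2(2) e in \<open>auto simp: add.commute\<close>)
    have eq: "x + s *\<^sub>R b + s *\<^sub>R a = x + s *\<^sub>R a + s *\<^sub>R b" by (simp add: algebra_simps)
    define Q where "Q = (f (x + s *\<^sub>R a + s *\<^sub>R b) - f (x + s *\<^sub>R a)) - (f (x + s *\<^sub>R b) - f x)"
    have A': "\<bar>Q - s\<^sup>2 * Da b\<bar> \<le> 2 * e * s\<^sup>2 * K" using A by (simp add: Q_def K_def)
    have B': "\<bar>Q - s\<^sup>2 * Db a\<bar> \<le> 2 * e * s\<^sup>2 * K" using B unfolding eq
      by (simp add: Q_def K_def algebra_simps)
    have "\<bar>s\<^sup>2 * (Da b - Db a)\<bar> \<le> 4 * e * s\<^sup>2 * K"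
      using A' B' by (simp add: right_diff_distrib)
    then have "s\<^sup>2 * \<bar>Da b - Db a\<bar> \<le> s\<^sup>2 * (4 * e * K)"
      by (simp only: abs_mult abs_power2 mult.commute mult.left_commute)
    then show ?thesis using s0 by simp
  qed
  show ?thesis
  proof (rule ccontr)
    assume ne: "Da b \<noteq> Db a"
    define d where "d = \<bar>Da b - Db a\<bar>"
    have d0: "d > 0" using ne by (simp add: d_def)
    have "d / (8 * (K + 1)) > 0" using d0 K0 by simp
    then have "d \<le> 4 * (d / (8 * (K + 1))) * K" unfolding d_def by (rule main)
    also have "\<dots> = d * (K / (2 * (K + 1)))" using K0 by (simp add: field_simps)
    also have "\<dots> < d * 1" using d0 K0 by (intro mult_strict_left_mono) (simp_all add: field_simps)
    finally show False by simp
  qed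
qed

lemma schwarz:
  fixes f :: "'a::real_normed_vector \<Rightarrow> 'b::euclidean_space"
  assumes S: "open S" "x \<in> S"
    and f': "\<And>y. y \<in> S \<Longrightarrow> (f has_derivative f' y) (at y)"
    and Da: "((\<lambda>y. f' y a) has_derivative Da) (at x)"
    and Db: "((\<lambda>y. f' y b) has_derivative Db) (at x)"
  shows "Da b = Db a"
proof (rule euclidean_eqI)
  fix c :: 'b assume "c \<in> Basis"
  have f'': "((\<lambda>y. f y \<bullet> c) has_derivative (\<lambda>h. f' y h \<bullet> c)) (at y)" if "y \<in> S" for y
    using bounded_linear.has_derivative[OF bounded_linear_inner_left f'[OF that]] .
  have Da': "((\<lambda>y. f' y a \<bullet> c) has_derivative (\<lambda>h. Da h \<bullet> c)) (at x)"
    using bounded_linear.has_derivative[OF bounded_linear_inner_left Da] .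
  have Db': "((\<lambda>y. f' y b \<bullet> c) has_derivative (\<lambda>h. Db h \<bullet> c)) (at x)"
    using bounded_linear.has_derivative[OF bounded_linear_inner_left Db] .
  show "Da b \<bullet> c = Db a \<bullet> c"
    using schwarz_real[OF S f'' Da' Db'] by simp
qed



lemma mink_inner: "mink p q = p \<bullet> (fst q, - snd q)"
  by (cases p, cases q) (simp add: mink_def)

lemma bb_mink: "bounded_bilinear (mink :: 'n::finite pt \<Rightarrow> 'n pt \<Rightarrow> real)"
proof -
  have "bounded_bilinear (\<lambda>x y. inner (id x) ((\<lambda>q. (fst q, - snd q)) (y :: 'n pt)) :: real)"
    by (rule bounded_bilinear.comp[OF bounded_bilinear_inner bounded_linear_ident[unfolded id_def[symmetric]]])
       (intro bounded_linear_Pair bounded_linear_fst bounded_linear_minus bounded_linear_snd)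
  then show ?thesis by (simp add: mink_inner[abs_def])
qed

lemma mink_sym: "mink p q = mink q p"
  by (simp add: mink_def inner_commute mult.commute)

lemmas mink_add_left = bounded_bilinear.add_left[OF bb_mink]
lemmas mink_add_right = bounded_bilinear.add_right[OF bb_mink]
lemmas mink_diff_left = bounded_bilinear.diff_left[OF bb_mink]
lemmas mink_diff_right = bounded_bilinear.diff_right[OF bb_mink]
lemmas mink_scaleR_left = bounded_bilinear.scaleR_left[OF bb_mink]
lemmas mink_scaleR_right = bounded_bilinear.scaleR_right[OF bb_mink]
lemmas mink_sum_left = bounded_bilinear.sum_left[OF bb_mink]
lemmas mink_sum_right = bounded_bilinear.sum_right[OF bb_mink]
lemmas mink_zero_left = bounded_bilinear.zero_left[OF bb_mink]
lemmas mink_zero_right = bounded_bilinear.zero_right[OF bb_mink]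
lemmas mink_minus_left = bounded_bilinear.minus_left[OF bb_mink]
lemmas mink_minus_right = bounded_bilinear.minus_right[OF bb_mink]

definition Emink :: "'n::finite pt" where "Emink = (0, 1)"

lemma mink_E: "mink z Emink = - snd z"
  by (simp add: mink_def Emink_def)

definition gram :: "('n::finite \<Rightarrow> 'n pt) \<Rightarrow> real^'n^'n" where
  "gram X = (\<chi> i j. mink (X i) (X j))"

definition amat :: "('n::finite \<Rightarrow> 'n pt) \<Rightarrow> real^'n^'n" where
  "amat X = (\<chi> k. fst (X k))"

definition coef :: "('n::finite \<Rightarrow> 'n pt) \<Rightarrow> 'n pt \<Rightarrow> real^'n" where
  "coef X y = transpose (matrix_inv (gram X)) *v (\<chi> i. mink (X i) y)"

definition proj :: "('n::finite \<Rightarrow> 'n pt) \<Rightarrow> 'n pt \<Rightarrow> 'n pt" where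
  "proj X y = (\<Sum>j\<in>UNIV. coef X y $ j *\<^sub>R X j)"

definition wvec :: "('n::finite \<Rightarrow> 'n pt) \<Rightarrow> 'n pt" where
  "wvec X = Emink - proj X Emink"

definition nvec :: "('n::finite \<Rightarrow> 'n pt) \<Rightarrow> 'n pt" where
  "nvec X = wvec X /\<^sub>R sqrt (- mink (wvec X) (wvec X))"

lemma det_nz_inj: "det (M::real^'n::finite^'n) \<noteq> 0 \<Longrightarrow> M *v x = 0 \<Longrightarrow> x = 0"
  using inj_matrix_vector_mult[of M] invertible_det_nz[of M]
  by (metis injD matrix_vector_mult_0_right)

lemma zlemma:
  assumes "det (amat X) \<noteq> 0" "\<And>k. mink z (X k) = 0" "snd z = 0"
  shows "z = 0"
proof -
  have "\<forall>k. (amat X *v fst z) $ k = 0"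
  proof
    fix k
    have "(amat X *v fst z) $ k = fst (X k) \<bullet> fst z"
      by (simp add: amat_def matrix_vector_mult_def inner_vec_def mult.commute)
    also have "\<dots> = mink z (X k)" using assms(3) by (simp add: mink_def inner_commute)
    finally show "(amat X *v fst z) $ k = 0" using assms(2) by simp
  qed
  then have "amat X *v fst z = 0" by (simp add: vec_eq_iff)
  then have "fst z = 0" using det_nz_inj assms(1) by blast
  then show ?thesis using assms(3) by (simp add: prod_eq_iff)
qed

lemma invertible_matrix_inv:
  assumes "invertible M"
  shows "M ** matrix_inv M = mat 1" "matrix_inv M ** M = mat 1"
  using someI_ex[OF assms[unfolded invertible_def]] unfolding matrix_inv_def by auto

lemma proj_prop:
  assumes "det (gram X) \<noteq> 0"
  shows "mink (proj X y) (X k) = mink y (X k)"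
proof -
  define gi where "gi = matrix_inv (gram X)"
  define yv where "yv = (\<chi> i. mink (X i) y)"
  have inv: "gi ** gram X = mat 1" using assms invertible_det_nz invertible_matrix_inv gi_def by blast
  have "mink (proj X y) (X k) = (\<Sum>j\<in>UNIV. coef X y $ j * gram X $ j $ k)"
    by (simp add: proj_def mink_sum_left mink_scaleR_left gram_def)
  also have "\<dots> = (coef X y v* gram X) $ k"
    by (simp add: vector_matrix_mult_def)
  also have "coef X y = yv v* gi" by (simp add: coef_def yv_def gi_def)
  also have "(yv v* gi) v* gram X = yv" by (simp add: vector_matrix_mul_assoc inv)
  finally show ?thesis by (simp add: yv_def mink_sym)
qed

lemma proj_span: "proj X y = (\<Sum>j\<in>UNIV. coef X y $ j *\<^sub>R X j)" by (simp add: proj_def)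

lemma wvec_orth: "det (gram X) \<noteq> 0 \<Longrightarrow> mink (wvec X) (X k) = 0"
  by (simp add: wvec_def mink_diff_left proj_prop)

lemma orth_span: "(\<And>k. mink z (X k) = 0) \<Longrightarrow> mink z (\<Sum>j\<in>UNIV. c j *\<^sub>R X j) = 0"
  by (simp add: mink_sum_right mink_scaleR_right)

lemma wvec_sq: "det (gram X) \<noteq> 0 \<Longrightarrow> mink (wvec X) (wvec X) = - snd (wvec X)"
proof -
  assume d: "det (gram X) \<noteq> 0"
  have "mink (wvec X) (wvec X) = mink (wvec X) Emink - mink (wvec X) (proj X Emink)"
    by (simp add: wvec_def mink_diff_right)
  also have "mink (wvec X) (proj X Emink) = 0"
    unfolding proj_def by (rule orth_span) (rule wvec_orth[OF d])
  finally show ?thesis by (simp add: mink_E)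
qed

lemma nvec_props:
  assumes d: "det (gram X) \<noteq> 0" and w: "mink (wvec X) (wvec X) < 0"
  shows "\<And>k. mink (nvec X) (X k) = 0" "mink (nvec X) (nvec X) = -1" "snd (nvec X) > 0"
proof -
  define c where "c = sqrt (- mink (wvec X) (wvec X))"
  have c0: "c > 0" using w by (simp add: c_def)
  have cc: "c * c = - mink (wvec X) (wvec X)" using w by (simp add: c_def)
  show "mink (nvec X) (X k) = 0" for k
    by (simp add: nvec_def mink_scaleR_left wvec_orth[OF d])
  show "mink (nvec X) (nvec X) = -1"
    using c0 cc w by (simp add: nvec_def mink_scaleR_left mink_scaleR_right c_def[symmetric] field_simps)
  show "snd (nvec X) > 0"
    using c0 w wvec_sq[OF d] by (simp add: nvec_def c_def[symmetric])
qed

lemma span_zero: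
  assumes dg: "det (gram X) \<noteq> 0" and da: "det (amat X) \<noteq> 0" and w: "mink (wvec X) (wvec X) < 0"
    and z: "\<And>k. mink z (X k) = 0" "mink z (nvec X) = 0"
  shows "z = 0"
proof (rule zlemma[OF da z(1)])
  have c0: "sqrt (- mink (wvec X) (wvec X)) > 0" using w by simp
  have "mink z (wvec X) = 0" using z(2) c0 by (simp add: nvec_def mink_scaleR_right)
  moreover have "mink z (proj X Emink) = 0" unfolding proj_def by (rule orth_span[OF z(1)])
  ultimately have "mink z Emink = 0" by (simp add: wvec_def mink_diff_right)
  then show "snd z = 0" by (simp add: mink_E)
qed

lemma nvec_unique:
  assumes dg: "det (gram X) \<noteq> 0" and da: "det (amat X) \<noteq> 0" and w: "mink (wvec X) (wvec X) < 0"
    and n: "\<And>k. mink n (X k) = 0" "mink n n = -1" "snd n > 0"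
  shows "n = nvec X"
proof -
  note N = nvec_props[OF dg w]
  define c where "c = - mink n (nvec X)"
  have "n - c *\<^sub>R nvec X = 0"
  proof (rule span_zero[OF dg da w])
    show "mink (n - c *\<^sub>R nvec X) (X k) = 0" for k using n(1) N(1) by (simp add: mink_diff_left mink_scaleR_left)
    show "mink (n - c *\<^sub>R nvec X) (nvec X) = 0" using N(2) by (simp add: mink_diff_left mink_add_left mink_scaleR_left c_def)
  qed
  then have nc: "n = c *\<^sub>R nvec X" by simp
  then have "c * c = 1" using n(2) N(2) by (simp add: mink_scaleR_left mink_scaleR_right)
  moreover have "c > 0" using n(3) N(3) nc by (simp add: zero_less_mult_iff)
  ultimately have "c = 1" by (metis abs_of_pos abs_square_eq_1 power2_eq_square)
  then show ?thesis using nc by simp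
qed

lemma quad_form: "v \<bullet> (gram X *v v) = mink (\<Sum>i\<in>UNIV. v $ i *\<^sub>R X i) (\<Sum>j\<in>UNIV. v $ j *\<^sub>R X j)"
  by (simp add: gram_def inner_vec_def matrix_vector_mult_def mink_sum_left mink_sum_right
      mink_scaleR_left mink_scaleR_right sum_distrib_left mult.assoc)
     (simp add: mink_sym ac_simps)

lemma posdef_det_gram:
  assumes pd: "\<And>v. v \<noteq> 0 \<Longrightarrow> v \<bullet> (gram X *v v) > 0"
  shows "det (gram X) \<noteq> 0"
proof
  assume "det (gram X) = 0"
  then have "\<not> inj ((*v) (gram X))"
    using det_nz_iff_inj[of "(*v) (gram X)"] by (simp add: matrix_vector_mul_linear)
  then obtain x y where "gram X *v x = gram X *v y" "x \<noteq> y" unfolding inj_def by blast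
  then have "gram X *v (x - y) = 0" "x - y \<noteq> 0" by (simp_all add: matrix_vector_mult_diff_distrib)
  then show False using pd[of "x - y"] by simp
qed

lemma posdef_det_amat:
  assumes pd: "\<And>v. v \<noteq> 0 \<Longrightarrow> v \<bullet> (gram X *v v) > 0"
  shows "det (amat X) \<noteq> 0"
proof
  assume "det (amat X) = 0"
  then have "det (transpose (amat X)) = 0" by (simp add: det_transpose)
  then have "\<not> inj ((*v) (transpose (amat X)))"
    using det_nz_iff_inj[of "(*v) (transpose (amat X))"] by (simp add: matrix_vector_mul_linear)
  then obtain x y where "transpose (amat X) *v x = transpose (amat X) *v y" "x \<noteq> y" unfolding inj_def by blast
  then have z: "transpose (amat X) *v (x - y) = 0" "x - y \<noteq> 0" by (simp_all add: matrix_vector_mult_diff_distrib)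
  define v where "v = x - y"
  have "fst (\<Sum>i\<in>UNIV. v $ i *\<^sub>R X i) = transpose (amat X) *v v"
    by (simp add: fst_sum vec_eq_iff amat_def matrix_vector_mult_def transpose_def mult.commute)
  then have "fst (\<Sum>i\<in>UNIV. v $ i *\<^sub>R X i) = 0" using z by (simp add: v_def)
  then have "v \<bullet> (gram X *v v) \<le> 0" by (simp add: quad_form mink_def)
  then show False using pd[of v] z(2) v_def by simp
qed

lemma posdef_wvec:
  fixes X :: "'n::finite \<Rightarrow> 'n pt"
  assumes pd: "\<And>v. v \<noteq> 0 \<Longrightarrow> v \<bullet> (gram X *v v) > 0"
  shows "mink (wvec X) (wvec X) < 0"
proof -
  have dg: "det (gram X) \<noteq> 0" by (rule posdef_det_gram[OF pd])
  define P where "P = proj X Emink"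
  have nn: "mink P P \<ge> 0"
  proof (cases "coef X Emink = 0")
    case True then show ?thesis by (simp add: P_def proj_def mink_zero_left)
  next
    case False
    then show ?thesis using pd[OF False] by (simp add: quad_form P_def proj_def)
  qed
  have o: "mink (wvec X) P = 0" unfolding P_def proj_def by (rule orth_span) (rule wvec_orth[OF dg])
  have e: "Emink = wvec X + P" by (simp add: wvec_def P_def)
  have "mink (wvec X + P) (wvec X + P) = mink (wvec X) (wvec X) + 2 * mink (wvec X) P + mink P P"
    by (simp add: mink_add_left mink_add_right mink_sym[of P "wvec X"])
  then have "mink (Emink::'n pt) Emink = mink (wvec X) (wvec X) + 2 * mink (wvec X) P + mink P P"
    using e by metis
  moreover have "mink (Emink::'n pt) Emink = -1" by (simp add: mink_def Emink_def)
  ultimately have "-1 = mink (wvec X) (wvec X) + mink P P" using o by simp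
  then show ?thesis using nn by linarith
qed



definition esp :: "'n::finite \<Rightarrow> 'n pt" where "esp i = (axis i 1, 0)"

definition XF :: "('n::finite pt \<Rightarrow> 'n pt) \<Rightarrow> 'n pt \<Rightarrow> 'n \<Rightarrow> 'n pt" where
  "XF F q i = frechet_derivative F (at q) (esp i)"

definition NF :: "('n::finite pt \<Rightarrow> 'n pt) \<Rightarrow> 'n pt \<Rightarrow> 'n pt" where
  "NF F q = nvec (XF F q)"

definition HF :: "('n::finite pt \<Rightarrow> 'n pt) \<Rightarrow> 'n pt \<Rightarrow> real" where
  "HF F q = (\<Sum>i\<in>UNIV. \<Sum>j\<in>UNIV. matrix_inv (gram (XF F q)) $ i $ j *
      mink (frechet_derivative (NF F) (at q) (esp i)) (XF F q j))"

definition SF :: "('n::finite pt \<Rightarrow> 'n pt) \<Rightarrow> 'n pt \<Rightarrow> real" where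
  "SF F q = - mink (F q) (NF F q)"

definition G1 :: "('n::finite pt \<Rightarrow> 'n pt) \<Rightarrow> 'n pt set \<Rightarrow> 'n pt set" where
  "G1 F W = {q \<in> W. det (gram (XF F q)) \<noteq> 0 \<and> det (amat (XF F q)) \<noteq> 0}"

definition GG :: "('n::finite pt \<Rightarrow> 'n pt) \<Rightarrow> 'n pt set \<Rightarrow> 'n pt set" where
  "GG F W = {q \<in> G1 F W. mink (wvec (XF F q)) (wvec (XF F q)) < 0}"

lemma open_nz: "open S \<Longrightarrow> continuous_on S f \<Longrightarrow> open {x \<in> S. (f x :: real) \<noteq> 0}"
proof -
  assume "open S" "continuous_on S f"
  then have "open (S \<inter> f -` (- {0}))" by (intro continuous_open_preimage) auto
  moreover have "S \<inter> f -` (- {0}) = {x \<in> S. f x \<noteq> 0}" by auto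
  ultimately show ?thesis by simp
qed

lemma open_neg: "open S \<Longrightarrow> continuous_on S f \<Longrightarrow> open {x \<in> S. (f x :: real) < 0}"
proof -
  assume "open S" "continuous_on S f"
  then have "open (S \<inter> f -` {..<0})" by (intro continuous_open_preimage) auto
  moreover have "S \<inter> f -` {..<0} = {x \<in> S. f x < 0}" by auto
  ultimately show ?thesis by simp
qed

lemma sm_XF: "open W \<Longrightarrow> smooth_on W F \<Longrightarrow> smooth_on W (\<lambda>q. XF F q i)"
  unfolding XF_def by (rule sm_deriv_sm)

lemma sm_gram: "open W \<Longrightarrow> smooth_on W F \<Longrightarrow> smooth_on W (\<lambda>q. gram (XF F q) $ i $ j)"
  unfolding gram_def by (simp add: sm_mink sm_XF)

lemma sm_amat: "open W \<Longrightarrow> smooth_on W F \<Longrightarrow> smooth_on W (\<lambda>q. amat (XF F q) $ i $ j)"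
  unfolding amat_def by (simp add: sm_nth sm_fst sm_XF)

lemma open_G1: "open W \<Longrightarrow> smooth_on W F \<Longrightarrow> open (G1 F W)"
proof -
  assume o: "open W" and s: "smooth_on W F"
  have c1: "continuous_on W (\<lambda>q. det (gram (XF F q)))"
    by (intro sm_continuous sm_det sm_gram o s)
  have c2: "continuous_on W (\<lambda>q. det (amat (XF F q)))"
    by (intro sm_continuous sm_det sm_amat o s)
  have o1: "open {q \<in> W. det (gram (XF F q)) \<noteq> 0}" by (rule open_nz[OF o c1])
  have c2': "continuous_on {q \<in> W. det (gram (XF F q)) \<noteq> 0} (\<lambda>q. det (amat (XF F q)))"
    using c2 by (rule continuous_on_subset) auto
  have "open {q \<in> {q \<in> W. det (gram (XF F q)) \<noteq> 0}. det (amat (XF F q)) \<noteq> 0}"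
    by (rule open_nz[OF o1 c2'])
  moreover have "{q \<in> {q \<in> W. det (gram (XF F q)) \<noteq> 0}. det (amat (XF F q)) \<noteq> 0} = G1 F W"
    by (auto simp: G1_def)
  ultimately show ?thesis by simp
qed

lemma matrix_inv_cramer:
  fixes M :: "real^'n::finite^'n"
  assumes "det M \<noteq> 0"
  shows "matrix_inv M $ k $ j = det (\<chi> i l. if l = k then axis j 1 $ i else M $ i $ l) / det M"
proof -
  have inv: "M ** matrix_inv M = mat 1" using assms invertible_det_nz invertible_matrix_inv by blast
  have "M *v (matrix_inv M *v axis j 1) = axis j 1"
    by (simp add: matrix_vector_mul_assoc inv)
  then have "matrix_inv M *v axis j 1 = (\<chi> k. det (\<chi> i l. if l = k then axis j 1 $ i else M $ i $ l) / det M)"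
    using cramer[OF assms] by blast
  moreover have "(matrix_inv M *v axis j 1) $ k = matrix_inv M $ k $ j"
    by (simp add: matrix_vector_mult_def axis_def if_distrib cong: if_cong)
  ultimately show ?thesis by simp
qed

lemma sm_ginv: "open W \<Longrightarrow> smooth_on W F \<Longrightarrow> smooth_on (G1 F W) (\<lambda>q. matrix_inv (gram (XF F q)) $ k $ j)"
proof -
  assume o: "open W" and s: "smooth_on W F"
  have sub: "G1 F W \<subseteq> W" by (auto simp: G1_def)
  have "smooth_on (G1 F W) (\<lambda>q. det (\<chi> i l. if l = k then axis j 1 $ i else gram (XF F q) $ i $ l) / det (gram (XF F q)))"
  proof (rule sm_divide[OF open_G1[OF o s]])
    show "smooth_on (G1 F W) (\<lambda>q. det (\<chi> i l. if l = k then axis j 1 $ i else gram (XF F q) $ i $ l))"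
    proof (rule sm_det)
      fix i l
      show "smooth_on (G1 F W) (\<lambda>q. (\<chi> i l. if l = k then axis j 1 $ i else gram (XF F q) $ i $ l) $ i $ l)"
        by (cases "l = k") (simp_all add: sm_const sm_subset[OF sm_gram[OF o s] sub])
    qed
    show "smooth_on (G1 F W) (\<lambda>q. det (gram (XF F q)))"
      by (rule sm_det) (rule sm_subset[OF sm_gram[OF o s] sub])
  qed (auto simp: G1_def)
  then show ?thesis
    by (rule sm_cong[OF open_G1[OF o s], rotated]) (simp add: G1_def matrix_inv_cramer)
qed

lemma coef_nth: "coef X y $ j = (\<Sum>i\<in>UNIV. matrix_inv (gram X) $ i $ j * mink (X i) y)"
  by (simp add: coef_def matrix_vector_mult_def transpose_def)

lemma sm_wvec: "open W \<Longrightarrow> smooth_on W F \<Longrightarrow> smooth_on (G1 F W) (\<lambda>q. wvec (XF F q))"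
proof -
  assume o: "open W" and s: "smooth_on W F"
  have sub: "G1 F W \<subseteq> W" by (auto simp: G1_def)
  have X: "smooth_on (G1 F W) (\<lambda>q. XF F q i)" for i by (rule sm_subset[OF sm_XF[OF o s] sub])
  show ?thesis
    unfolding wvec_def proj_def coef_nth
    by (intro sm_diff sm_const sm_sum sm_scaleR sm_mult sm_mink X sm_ginv[OF o s]) auto
qed

lemma open_GG: "open W \<Longrightarrow> smooth_on W F \<Longrightarrow> open (GG F W)"
proof -
  assume o: "open W" and s: "smooth_on W F"
  have "continuous_on (G1 F W) (\<lambda>q. mink (wvec (XF F q)) (wvec (XF F q)))"
    by (intro sm_continuous sm_mink sm_wvec o s)
  then show ?thesis unfolding GG_def by (rule open_neg[OF open_G1[OF o s]])
qed

lemma GG_sub: "GG F W \<subseteq> G1 F W" "G1 F W \<subseteq> W" by (auto simp: GG_def G1_def)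

lemma sm_NF: "open W \<Longrightarrow> smooth_on W F \<Longrightarrow> smooth_on (GG F W) (NF F)"
proof -
  assume o: "open W" and s: "smooth_on W F"
  have w: "smooth_on (GG F W) (\<lambda>q. wvec (XF F q))" by (rule sm_subset[OF sm_wvec[OF o s] GG_sub(1)])
  have "smooth_on (GG F W) (\<lambda>q. inverse (sqrt (- mink (wvec (XF F q)) (wvec (XF F q)))) *\<^sub>R wvec (XF F q))"
    by (intro sm_scaleR w sm_inverse sm_sqrt open_GG o s sm_minus sm_mink) (auto simp: GG_def)
  then show ?thesis unfolding NF_def nvec_def by (simp add: divide_inverse_commute)
qed

lemma sm_HF: "open W \<Longrightarrow> smooth_on W F \<Longrightarrow> smooth_on (GG F W) (HF F)"
proof -
  assume o: "open W" and s: "smooth_on W F"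
  have sub: "GG F W \<subseteq> W" using GG_sub by blast
  show ?thesis unfolding HF_def[abs_def]
    by (intro sm_sum sm_mult sm_mink sm_deriv_sm[OF open_GG[OF o s] sm_NF[OF o s]]
        sm_subset[OF sm_XF[OF o s] sub] sm_subset[OF sm_ginv[OF o s] GG_sub(1)]) auto
qed

lemma sm_SF: "open W \<Longrightarrow> smooth_on W F \<Longrightarrow> smooth_on (GG F W) (SF F)"
proof -
  assume o: "open W" and s: "smooth_on W F"
  have sub: "GG F W \<subseteq> W" using GG_sub by blast
  show ?thesis unfolding SF_def[abs_def]
    by (intro sm_minus sm_mink sm_NF[OF o s] sm_subset[OF s sub])
qed



lemma part_u: "(f has_derivative f') (at (u,t)) \<Longrightarrow> ((\<lambda>v. f (v,t)) has_derivative (\<lambda>h. f' (h,0))) (at u)"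
proof -
  assume d: "(f has_derivative f') (at (u,t))"
  have "((\<lambda>v. (v,t)) has_derivative (\<lambda>h. (h,0))) (at u)"
    by (auto intro!: derivative_eq_intros)
  from diff_chain_at[OF this, of f f'] d show ?thesis by (simp add: o_def)
qed

lemma part_t: "(f has_derivative f') (at (u,t)) \<Longrightarrow> ((\<lambda>s. f (u,s)) has_derivative (\<lambda>r. f' (0,r))) (at t)"
proof -
  assume d: "(f has_derivative f') (at (u,t))"
  have "((\<lambda>s. (u,s)) has_derivative (\<lambda>r. (0,r))) (at t)"
    by (auto intro!: derivative_eq_intros)
  from diff_chain_at[OF this, of f f'] d show ?thesis by (simp add: o_def)
qed

lemma frechet_part_u: "(f has_derivative f') (at (u,t)) \<Longrightarrow> frechet_derivative (\<lambda>v. f (v,t)) (at u) = (\<lambda>h. f' (h,0))"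
  using part_u frechet_derivative_at by metis

lemma transfer_u:
  assumes "open G" "(u,t) \<in> G" "\<And>v. (v,t) \<in> G \<Longrightarrow> g v = f (v,t)" "(f has_derivative f') (at (u,t))"
  shows "frechet_derivative g (at u) = (\<lambda>h. f' (h,0))"
proof -
  have oG: "open {v. (v,t) \<in> G}"
  proof -
    have "continuous_on UNIV (\<lambda>v::'a. (v,t))" by (intro continuous_intros)
    then have "open (UNIV \<inter> (\<lambda>v::'a. (v,t)) -` G)" using assms(1) by (intro continuous_open_preimage) auto
    then show ?thesis by (simp add: vimage_def)
  qed
  have "(g has_derivative (\<lambda>h. f' (h,0))) (at u)"
    by (rule has_derivative_transform_within_open[OF part_u[OF assms(4)] oG]) (use assms in auto)
  then show ?thesis using frechet_derivative_at by metis
qed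

lemma const_deriv:
  assumes "open G" "p \<in> G" "\<And>q. q \<in> G \<Longrightarrow> f q = c" "(f has_derivative f') (at p)"
  shows "f' h = 0"
proof -
  have "((\<lambda>q. c) has_derivative (\<lambda>h. 0)) (at p)" by simp
  then have "(f has_derivative (\<lambda>h. 0)) (at p)"
    by (rule has_derivative_transform_within_open[OF _ assms(1,2)]) (use assms(3) in auto)
  then have "f' = (\<lambda>h. 0)" using assms(4) has_derivative_unique by blast
  then show ?thesis by simp
qed

lemma ray_zero:
  fixes \<Phi> :: "'a::real_normed_vector \<Rightarrow> 'b::real_normed_vector"
  assumes d: "(\<Phi> has_derivative \<Phi>') (at p)" and r: "r > 0"
    and z: "\<And>s. 0 \<le> s \<Longrightarrow> s < r \<Longrightarrow> \<Phi> (p + s *\<^sub>R v) = \<Phi> p"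
  shows "\<Phi>' v = 0"
proof -
  have a: "((\<lambda>s. p + s *\<^sub>R v) has_derivative (\<lambda>s. s *\<^sub>R v)) (at 0)"
    by (auto intro!: derivative_eq_intros)
  have "((\<lambda>s. \<Phi> (p + s *\<^sub>R v)) has_derivative (\<lambda>s. \<Phi>' (s *\<^sub>R v))) (at 0)"
    using diff_chain_at[OF a, of \<Phi> \<Phi>'] d by (simp add: o_def)
  then have h1: "((\<lambda>s. \<Phi> (p + s *\<^sub>R v)) has_derivative (\<lambda>s. \<Phi>' (s *\<^sub>R v))) (at 0 within {0..<r})"
    by (rule has_derivative_at_withinI)
  have "((\<lambda>s. \<Phi> p) has_derivative (\<lambda>s. 0)) (at 0 within {0..<r})" by simp
  then have h2: "((\<lambda>s. \<Phi> (p + s *\<^sub>R v)) has_derivative (\<lambda>s. 0)) (at 0 within {0..<r})"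
    by (rule has_derivative_transform_within[OF _ r]) (use r z in auto)
  have "(\<lambda>s. \<Phi>' (s *\<^sub>R v)) = (\<lambda>s. 0)"
  proof (rule frechet_derivative_unique_within[OF h1 h2])
    fix i :: real and e :: real assume "i \<in> Basis" "e > 0"
    then have i: "i = 1" by simp
    show "\<exists>d. 0 < \<bar>d\<bar> \<and> \<bar>d\<bar> < e \<and> 0 + d *\<^sub>R i \<in> {0..<r}"
      by (rule exI[of _ "min e r / 2"]) (use \<open>e > 0\<close> r i in auto)
  qed
  then have "\<Phi>' (1 *\<^sub>R v) = 0" by metis
  then show ?thesis by simp
qed



lemma dX_eq: "open W \<Longrightarrow> smooth_on W F \<Longrightarrow> (u,t) \<in> W \<Longrightarrow> dX F u t i = XF F (u,t) i"
  unfolding dX_def XF_def esp_def using frechet_part_u[OF sm_deriv] by metis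

lemma gmat_eq:
  assumes "open W" "smooth_on W F" "(u,t) \<in> W"
  shows "gmat F u t = gram (XF F (u,t))"
  unfolding gmat_def gram_def using dX_eq[OF assms] by (simp add: vec_eq_iff)

lemma nu_eq:
  assumes o: "open W" and s: "smooth_on W F" and q: "(u,t) \<in> GG F W"
  shows "nu F u t = NF F (u,t)"
proof -
  have W: "(u,t) \<in> W" using q GG_sub by blast
  define X where "X = XF F (u,t)"
  have dg: "det (gram X) \<noteq> 0" and da: "det (amat X) \<noteq> 0" and w: "mink (wvec X) (wvec X) < 0"
    using q by (auto simp: GG_def G1_def X_def)
  have "(THE n. (\<forall>i. mink n (dX F u t i) = 0) \<and> mink n n = -1 \<and> snd n > 0) = nvec X"
  proof (rule the_equality)
    show "(\<forall>i. mink (nvec X) (dX F u t i) = 0) \<and> mink (nvec X) (nvec X) = -1 \<and> snd (nvec X) > 0"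
      using nvec_props[OF dg w] dX_eq[OF o s W] by (simp add: X_def)
    fix n assume "(\<forall>i. mink n (dX F u t i) = 0) \<and> mink n n = -1 \<and> snd n > 0"
    then show "n = nvec X" using nvec_unique[OF dg da w] dX_eq[OF o s W] by (simp add: X_def)
  qed
  then show ?thesis by (simp add: nu_def NF_def X_def)
qed

lemma mcurv_eq:
  assumes o: "open W" and s: "smooth_on W F" and q: "(u,t) \<in> GG F W"
  shows "mcurv F u t = HF F (u,t)"
proof -
  have W: "(u,t) \<in> W" using q GG_sub by blast
  have oG: "open (GG F W)" by (rule open_GG[OF o s])
  have dN: "(NF F has_derivative frechet_derivative (NF F) (at (u,t))) (at (u,t))"
    by (rule sm_deriv[OF oG sm_NF[OF o s] q])
  have fd: "frechet_derivative (\<lambda>v. nu F v t) (at u) = (\<lambda>h. frechet_derivative (NF F) (at (u,t)) (h,0))"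
    by (rule transfer_u[OF oG q _ dN]) (simp add: nu_eq[OF o s])
  show ?thesis
    unfolding mcurv_def HF_def ginv_def gmat_eq[OF o s W] sff_def fd dX_eq[OF o s W]
    by (simp add: esp_def)
qed

lemma Sfun_eq:
  assumes o: "open W" and s: "smooth_on W F" and q: "(u,t) \<in> GG F W"
  shows "Sfun F u t = SF F (u,t)"
  unfolding Sfun_def SF_def nu_eq[OF assms] ..

lemma posdef_GG:
  assumes o: "open W" and s: "smooth_on W F" and W: "(u,t) \<in> W"
    and pd: "\<forall>v. v \<noteq> 0 \<longrightarrow> v \<bullet> (gmat F u t *v v) > 0"
  shows "(u,t) \<in> GG F W"
proof -
  have pd': "\<And>v. v \<noteq> 0 \<Longrightarrow> v \<bullet> (gram (XF F (u,t)) *v v) > 0" using pd gmat_eq[OF o s W] by simp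
  show ?thesis unfolding GG_def G1_def
    using W posdef_det_gram[OF pd'] posdef_det_amat[OF pd'] posdef_wvec[OF pd'] by simp
qed



definition xmap :: "'n::finite pt \<Rightarrow> real^'n" where "xmap q = inverse (snd q) *\<^sub>R fst q"

definition Nc :: "(real^'n::finite \<Rightarrow> real) \<Rightarrow> 'n pt \<Rightarrow> 'n pt" where
  "Nc \<phi> q = (egrad \<phi> (xmap q), egrad \<phi> (xmap q) \<bullet> xmap q)"

definition V0 :: "'n::finite pt set" where "V0 = {q. snd q \<noteq> 0}"

definition VV :: "(real^'n::finite \<Rightarrow> real) \<Rightarrow> 'n pt set" where
  "VV \<phi> = {q \<in> V0. - mink (Nc \<phi> q) (Nc \<phi> q) < 0}"

lemma cone_normal_eq: "cone_normal \<phi> q = Nc \<phi> q /\<^sub>R sqrt (mink (Nc \<phi> q) (Nc \<phi> q))"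
  by (simp add: cone_normal_def Nc_def xmap_def Let_def)

lemma open_V0: "open (V0 :: 'n::finite pt set)"
proof -
  have "open {q::'n pt. q \<in> UNIV \<and> snd q \<noteq> 0}" by (rule open_nz[OF open_UNIV continuous_on_snd[OF continuous_on_id]])
  then show ?thesis by (simp add: V0_def)
qed

lemma sm_xmap: "smooth_on V0 xmap"
  unfolding xmap_def[abs_def]
  by (intro sm_scaleR sm_inverse open_V0 sm_snd sm_fst sm_id) (auto simp: V0_def)

lemma sm_egrad: "smooth_on UNIV \<phi> \<Longrightarrow> smooth_on UNIV (egrad \<phi>)"
  unfolding egrad_def[abs_def] by (intro sm_vec sm_deriv_sm) auto

lemma sm_Nc: "smooth_on UNIV \<phi> \<Longrightarrow> smooth_on V0 (Nc \<phi>)"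
proof -
  assume p: "smooth_on UNIV \<phi>"
  have e: "smooth_on V0 (\<lambda>q. egrad \<phi> (xmap q))"
    by (rule sm_compose[OF open_V0 open_UNIV sm_egrad[OF p] sm_xmap]) auto
  show ?thesis unfolding Nc_def[abs_def] by (intro sm_Pair e sm_inner sm_xmap)
qed

lemma open_VV: "smooth_on UNIV \<phi> \<Longrightarrow> open (VV \<phi>)"
  unfolding VV_def by (intro open_neg open_V0 sm_continuous sm_minus sm_mink sm_Nc)

lemma sm_cone: "smooth_on UNIV \<phi> \<Longrightarrow> smooth_on (VV \<phi>) (cone_normal \<phi>)"
proof -
  assume p: "smooth_on UNIV \<phi>"
  have sub: "VV \<phi> \<subseteq> V0" by (auto simp: VV_def)
  have N: "smooth_on (VV \<phi>) (Nc \<phi>)" by (rule sm_subset[OF sm_Nc[OF p] sub])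
  have "smooth_on (VV \<phi>) (\<lambda>q. inverse (sqrt (mink (Nc \<phi> q) (Nc \<phi> q))) *\<^sub>R Nc \<phi> q)"
    by (intro sm_scaleR N sm_inverse sm_sqrt open_VV p sm_mink) (auto simp: VV_def)
  then show ?thesis by (simp add: cone_normal_eq[abs_def])
qed

lemma cone_homog:
  assumes c: "c > 0" shows "cone_normal \<phi> (c *\<^sub>R q) = cone_normal \<phi> q"
proof -
  have e: "fst (c *\<^sub>R q) /\<^sub>R snd (c *\<^sub>R q) = fst q /\<^sub>R snd q"
  proof (cases "snd q = 0")
    case True then show ?thesis by simp
  next
    case False then show ?thesis using c by (simp add: field_simps)
  qed
  show ?thesis by (simp only: cone_normal_def Let_def e)
qed

lemma bcone_pt:
  assumes "q \<in> bcone \<phi>"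
  obtains l x where "l > 0" "\<phi> x = 0" "q = (l *\<^sub>R x, l)"
  using assms unfolding bcone_def by blast

lemma xmap_bcone: "l > 0 \<Longrightarrow> xmap (l *\<^sub>R x, l) = x"
  by (simp add: xmap_def)

lemma VV_bcone:
  assumes l: "l > 0" and x: "norm x < 1" and g: "egrad \<phi> x \<noteq> 0"
  shows "(l *\<^sub>R x, l) \<in> VV \<phi>"
proof -
  define gg where "gg = egrad \<phi> x"
  have "(gg \<bullet> x)\<^sup>2 \<le> (gg \<bullet> gg) * (x \<bullet> x)" by (rule Cauchy_Schwarz_ineq)
  also have "\<dots> < gg \<bullet> gg * 1"
  proof (rule mult_strict_left_mono)
    show "x \<bullet> x < 1" using x by (simp add: power2_norm_eq_inner[symmetric] abs_square_less_1)
    show "0 < gg \<bullet> gg" using g by (simp add: gg_def)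
  qed
  finally have "(gg \<bullet> x)\<^sup>2 < gg \<bullet> gg" by simp
  then show ?thesis using l
    by (simp add: VV_def V0_def Nc_def xmap_bcone gg_def[symmetric] mink_def power2_eq_square)
qed

lemma cone_props:
  assumes l: "l > 0" and x: "norm x < 1" and g: "egrad \<phi> x \<noteq> 0"
  shows "mink (l *\<^sub>R x, l) (cone_normal \<phi> (l *\<^sub>R x, l)) = 0"
    "mink (cone_normal \<phi> (l *\<^sub>R x, l)) (cone_normal \<phi> (l *\<^sub>R x, l)) = 1"
proof -
  have V: "(l *\<^sub>R x, l) \<in> VV \<phi>" by (rule VV_bcone[OF assms])
  define N where "N = Nc \<phi> (l *\<^sub>R x, l)"
  have pos: "mink N N > 0" using V by (simp add: VV_def N_def)
  have "mink (l *\<^sub>R x, l) N = 0" using l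
    by (simp add: N_def Nc_def xmap_bcone mink_def inner_commute)
  then show "mink (l *\<^sub>R x, l) (cone_normal \<phi> (l *\<^sub>R x, l)) = 0"
    by (simp add: cone_normal_eq N_def[symmetric] mink_scaleR_right)
  show "mink (cone_normal \<phi> (l *\<^sub>R x, l)) (cone_normal \<phi> (l *\<^sub>R x, l)) = 1"
    using pos real_sqrt_pow2[of "mink N N"]
    by (simp add: cone_normal_eq N_def[symmetric] mink_scaleR_right mink_scaleR_left power2_eq_square field_simps)
qed

lemma frechet_egrad:
  assumes "(\<phi> has_derivative L) (at x)"
  shows "L v = egrad \<phi> x \<bullet> v"
proof -
  have lin: "linear L" using assms has_derivative_bounded_linear bounded_linear.linear by blast
  have fd: "frechet_derivative \<phi> (at x) = L" using assms frechet_derivative_at by metis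
  have "L v = L (\<Sum>i\<in>UNIV. v $ i *\<^sub>R axis i 1)"
    using basis_expansion[of v] by (simp add: scalar_mult_eq_scaleR)
  also have "\<dots> = (\<Sum>i\<in>UNIV. v $ i * L (axis i 1))" using lin by (simp add: linear_sum linear_cmul)
  also have "\<dots> = egrad \<phi> x \<bullet> v" by (simp add: egrad_def inner_vec_def fd mult.commute)
  finally show ?thesis .
qed

lemma psi_deriv:
  assumes p: "smooth_on UNIV \<phi>" and q: "q \<in> V0"
  shows "((\<lambda>q. \<phi> (xmap q)) has_derivative (\<lambda>h. mink (Nc \<phi> q) h / snd q)) (at q)"
proof -
  define s where "s = snd q"
  have s0: "s \<noteq> 0" using q by (simp add: V0_def s_def)
  have dx: "(xmap has_derivative (\<lambda>h. inverse (snd q) *\<^sub>R fst h + (- (inverse (snd q) * snd h * inverse (snd q))) *\<^sub>R fst q)) (at q)"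
    unfolding xmap_def[abs_def] using s0 s_def by (auto intro!: derivative_eq_intros)
  have dphi: "(\<phi> has_derivative frechet_derivative \<phi> (at (xmap q))) (at (xmap q))"
    by (rule sm_deriv[OF open_UNIV p]) simp
  have c: "((\<lambda>q. \<phi> (xmap q)) has_derivative (\<lambda>h. frechet_derivative \<phi> (at (xmap q))
            (inverse (snd q) *\<^sub>R fst h + (- (inverse (snd q) * snd h * inverse (snd q))) *\<^sub>R fst q))) (at q)"
    using diff_chain_at[OF dx dphi] by (simp add: o_def)
  have eq: "frechet_derivative \<phi> (at (xmap q))
            (inverse (snd q) *\<^sub>R fst h + (- (inverse (snd q) * snd h * inverse (snd q))) *\<^sub>R fst q)
          = mink (Nc \<phi> q) h / snd q" for h
    unfolding frechet_egrad[OF dphi] using s0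
    by (simp add: Nc_def mink_def xmap_def inner_add_right inner_diff_right s_def[symmetric] field_simps)
  show ?thesis using c unfolding eq .
qed



lemma chart_rays:
  assumes U: "openin (top_of_set {u::real^'n::finite. 0 \<le> u $ i0}) U" and u: "u \<in> U"
  obtains r where "r > 0" "\<And>s k. 0 \<le> s \<Longrightarrow> s < r \<Longrightarrow> u + s *\<^sub>R axis k 1 \<in> U"
proof -
  obtain Op where O: "open Op" "U = {u. 0 \<le> u $ i0} \<inter> Op" using U by (auto simp: openin_open)
  then have uO: "u \<in> Op" "0 \<le> u $ i0" using u by auto
  obtain r where r: "r > 0" "ball u r \<subseteq> Op" using O(1) uO(1) open_contains_ball by blast
  have "u + s *\<^sub>R axis k 1 \<in> U" if "0 \<le> s" "s < r" for s k
  proof -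
    have "dist u (u + s *\<^sub>R axis k 1) = s" using that(1) by (simp add: dist_norm norm_minus_commute)
    then have "u + s *\<^sub>R axis k 1 \<in> Op" using r that by auto
    moreover have "0 \<le> (u + s *\<^sub>R axis k 1) $ i0" using uO(2) that(1) by (simp add: axis_def)
    ultimately show ?thesis using O(2) by simp
  qed
  then show ?thesis using r(1) that by blast
qed

lemma S_pos:
  assumes l: "l > 0" and x: "norm x < 1" and N: "mink N N = -1" "snd N > 0"
  shows "mink (l *\<^sub>R x, l) N < 0"
proof -
  have "fst N \<bullet> fst N = snd N ^ 2 - 1" using N(1) by (simp add: mink_def power2_eq_square)
  then have "norm (fst N) ^ 2 = snd N ^ 2 - 1" by (simp only: power2_norm_eq_inner)
  then have "norm (fst N) < snd N" using N(2)
    by (smt (verit) norm_ge_zero power2_less_imp_less power_mono)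
  have "x \<bullet> fst N \<le> norm x * norm (fst N)" by (rule norm_cauchy_schwarz)
  also have "\<dots> \<le> norm (fst N)" using x by (simp add: mult_left_le_one_le)
  also have "\<dots> < snd N" by fact
  finally have "x \<bullet> fst N - snd N < 0" by simp
  then show ?thesis using l by (simp add: mink_def mult_pos_neg)
qed

lemma sum_single: "(\<And>k. k \<noteq> i \<Longrightarrow> f k = 0) \<Longrightarrow> (\<Sum>k\<in>(UNIV::'n::finite set). f k) = (f i :: real)"
proof -
  assume z: "\<And>k. k \<noteq> i \<Longrightarrow> f k = 0"
  have "(\<Sum>k\<in>UNIV. f k) = f i + (\<Sum>k\<in>UNIV - {i}. f k)" by (rule sum.remove) auto
  also have "(\<Sum>k\<in>UNIV - {i}. f k) = 0" using z by (intro sum.neutral) auto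
  finally show ?thesis by simp
qed



theorem corollary5p6:
  fixes \<phi> :: "real^'n::finite \<Rightarrow> real"
    and F :: "'n pt \<Rightarrow> 'n pt"
    and U :: "(real^'n) set" and W :: "'n pt set"
    and i0 :: 'n and T :: real
  assumes n2: "CARD('n) \<ge> 2"
    and phi_smooth: "smooth_on UNIV \<phi>"
    and phi_regular: "\<forall>x. \<phi> x = 0 \<longrightarrow> egrad \<phi> x \<noteq> 0"
    and St_ball: "{x. \<phi> x = 0} \<subseteq> ball 0 1"
    and D_domain: "connected {x. \<phi> x < 0}" "{x. \<phi> x < 0} \<noteq> {}" "bounded {x. \<phi> x < 0}"
    and U_chart: "openin (top_of_set {u. 0 \<le> u $ i0}) U"
    and W_open: "open W" and W_sub: "U \<times> {0..<T} \<subseteq> W"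
    and F_smooth: "smooth_on W F"
    and embed: "\<forall>t\<in>{0..<T}. inj_on (\<lambda>u. F (u, t)) U"
    and spacelike: "\<forall>u\<in>U. \<forall>t\<in>{0..<T}. \<forall>v. v \<noteq> 0 \<longrightarrow> v \<bullet> (gmat F u t *v v) > 0"
    and inside: "\<forall>u\<in>U. \<forall>t\<in>{0..<T}. F (u, t) \<in> scone \<phi>"
    and flow: "\<forall>u\<in>U. \<forall>t\<in>{0..<T}.
                 vector_derivative (\<lambda>s. F (u, s)) (at t) = mcurv F u t *\<^sub>R nu F u t"
    and bdry: "\<forall>u\<in>U. \<forall>t\<in>{0..<T}. u $ i0 = 0 \<longrightarrow> F (u, t) \<in> bcone \<phi>"
    and neumann: "\<forall>u\<in>U. \<forall>t\<in>{0..<T}. u $ i0 = 0 \<longrightarrow>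
                    mink (nu F u t) (cone_normal \<phi> (F (u, t))) = 0"
  shows "\<forall>u\<in>U. \<forall>t\<in>{0..<T}. u $ i0 = 0 \<longrightarrow>
           mink (mgrad F t (\<lambda>v. mcurv F v t / Sfun F v t) u) (cone_normal \<phi> (F (u, t))) = 0"
proof (intro ballI impI)
  fix u t assume uU: "u \<in> U" and tT: "t \<in> {0..<T}" and ub: "u $ i0 = 0"
  define p0 where "p0 = (u, t)"
  have oW: "open W" by (rule W_open)
  note sF = F_smooth
  define G where "G = GG F W"
  have oG: "open G" unfolding G_def by (rule open_GG[OF oW sF])
  have GW: "G \<subseteq> W" using GG_sub G_def by blast
  have UTW: "\<And>v s. v \<in> U \<Longrightarrow> s \<in> {0..<T} \<Longrightarrow> (v, s) \<in> W" using W_sub by blast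
  have UTG: "\<And>v s. v \<in> U \<Longrightarrow> s \<in> {0..<T} \<Longrightarrow> (v, s) \<in> G"
    unfolding G_def using posdef_GG[OF oW sF UTW] spacelike by blast
  have p0G: "p0 \<in> G" using UTG uU tT p0_def by blast
  have p0W: "p0 \<in> W" using GW p0G by blast
  define F' where "F' q = frechet_derivative F (at q)" for q
  have dF: "\<And>q. q \<in> W \<Longrightarrow> (F has_derivative F' q) (at q)"
    unfolding F'_def by (rule sm_deriv[OF oW sF])
  define X where "X = XF F p0"
  have Xj: "X j = F' p0 (esp j)" for j by (simp add: X_def XF_def F'_def)
  define N where "N = NF F"
  define H where "H = HF F"
  define S where "S = SF F"
  define N0 where "N0 = N p0"
  define H0 where "H0 = H p0"
  define S0 where "S0 = S p0"
  define F0 where "F0 = F p0"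
  define DN where "DN = frechet_derivative N (at p0)"
  define DH where "DH = frechet_derivative H (at p0)"
  define DS where "DS = frechet_derivative S (at p0)"
  have dN: "(N has_derivative DN) (at p0)" unfolding DN_def N_def
    by (rule sm_deriv[OF oG sm_NF[OF oW sF, folded G_def] p0G])
  have dH: "(H has_derivative DH) (at p0)" unfolding DH_def H_def
    by (rule sm_deriv[OF oG sm_HF[OF oW sF, folded G_def] p0G])
  have dS: "(S has_derivative DS) (at p0)" unfolding DS_def S_def
    by (rule sm_deriv[OF oG sm_SF[OF oW sF, folded G_def] p0G])
  have dets: "det (gram X) \<noteq> 0" "det (amat X) \<noteq> 0" "mink (wvec X) (wvec X) < 0"
    using p0G by (auto simp: G_def GG_def G1_def X_def)
  have N0X: "N0 = nvec X" by (simp add: N0_def N_def NF_def X_def)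
  note Nprops = nvec_props[OF dets(1) dets(3), folded N0X]
  have F0b: "F0 \<in> bcone \<phi>" using bdry uU tT ub by (simp add: F0_def p0_def)
  then obtain l x where lx: "l > 0" "\<phi> x = 0" "F0 = (l *\<^sub>R x, l)" by (rule bcone_pt)
  have xn: "norm x < 1" using St_ball lx(2) by auto
  have gx: "egrad \<phi> x \<noteq> 0" using phi_regular lx(2) by blast
  define \<mu> where "\<mu> = cone_normal \<phi>"
  define \<mu>0 where "\<mu>0 = \<mu> F0"
  define D\<mu> where "D\<mu> = frechet_derivative \<mu> (at F0)"
  have F0V: "F0 \<in> VV \<phi>" using VV_bcone[OF lx(1) xn gx] lx(3) by simp
  have d\<mu>: "(\<mu> has_derivative D\<mu>) (at F0)" unfolding D\<mu>_def \<mu>_def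
    by (rule sm_deriv[OF open_VV[OF phi_smooth] sm_cone[OF phi_smooth] F0V])
  have cp: "mink F0 \<mu>0 = 0" "mink \<mu>0 \<mu>0 = 1"
    using cone_props[OF lx(1) xn gx] lx(3) by (simp_all add: \<mu>0_def \<mu>_def)
  have S0pos: "S0 > 0"
    using S_pos[OF lx(1) xn Nprops(2,3)] lx(3) by (simp add: S0_def S_def SF_def N0_def N_def F0_def)
  have "mink (nu F u t) (cone_normal \<phi> (F (u,t))) = 0" using neumann uU tT ub by blast
  then have N\<mu>: "mink N0 \<mu>0 = 0"
    using nu_eq[OF oW sF, of u t] p0G
    by (simp add: G_def N0_def N_def \<mu>0_def \<mu>_def F0_def p0_def)
  have linF': "linear (F' p0)" using dF[OF p0W] has_derivative_bounded_linear bounded_linear.linear by blast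
  have linDN: "linear DN" using dN has_derivative_bounded_linear bounded_linear.linear by blast
  have linDH: "linear DH" using dH has_derivative_bounded_linear bounded_linear.linear by blast
  have linDS: "linear DS" using dS has_derivative_bounded_linear bounded_linear.linear by blast
  have linD\<mu>: "linear D\<mu>" using d\<mu> has_derivative_bounded_linear bounded_linear.linear by blast
  define DX where "DX j = frechet_derivative (\<lambda>q. XF F q j) (at p0)" for j
  have dX: "((\<lambda>q. XF F q j) has_derivative DX j) (at p0)" for j
    unfolding DX_def by (rule sm_deriv[OF oW sm_XF[OF oW sF] p0W])
  have dX': "((\<lambda>q. F' q (esp j)) has_derivative DX j) (at p0)" for j
    using dX[of j] by (simp add: XF_def F'_def)
  define DT where "DT = frechet_derivative (\<lambda>q. F' q Emink) (at p0)"
  have dT: "((\<lambda>q. F' q Emink) has_derivative DT) (at p0)"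
    unfolding DT_def F'_def by (rule sm_deriv[OF oW sm_deriv_sm[OF oW sF] p0W])
  have symT: "DX j Emink = DT (esp j)" for j
    by (rule schwarz[OF oW p0W dF dX' dT])
  have symX: "DX j (esp k) = DX k (esp j)" for j k
    by (rule schwarz[OF oW p0W dF dX' dX'])
  have orth: "mink N0 (DX j h) + mink (DN h) (X j) = 0" for j h
  proof -
    have d: "((\<lambda>q. mink (N q) (XF F q j)) has_derivative (\<lambda>h. mink (N p0) (DX j h) + mink (DN h) (XF F p0 j))) (at p0)"
      by (rule bounded_bilinear.FDERIV[OF bb_mink dN dX])
    have c: "mink (N q) (XF F q j) = 0" if "q \<in> G" for q
    proof -
      have "det (gram (XF F q)) \<noteq> 0" "mink (wvec (XF F q)) (wvec (XF F q)) < 0"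
        using that by (auto simp: G_def GG_def G1_def)
      then show ?thesis using nvec_props(1) by (simp add: N_def NF_def)
    qed
    show ?thesis using const_deriv[OF oG p0G c d] by (simp add: N0_def X_def)
  qed
  have normN: "mink (DN h) N0 = 0" for h
  proof -
    have d: "((\<lambda>q. mink (N q) (N q)) has_derivative (\<lambda>h. mink (N p0) (DN h) + mink (DN h) (N p0))) (at p0)"
      by (rule bounded_bilinear.FDERIV[OF bb_mink dN dN])
    have c: "mink (N q) (N q) = -1" if "q \<in> G" for q
    proof -
      have "det (gram (XF F q)) \<noteq> 0" "mink (wvec (XF F q)) (wvec (XF F q)) < 0"
        using that by (auto simp: G_def GG_def G1_def)
      then show ?thesis using nvec_props(2) by (simp add: N_def NF_def)
    qed
    show ?thesis using const_deriv[OF oG p0G c d] by (simp add: N0_def mink_sym)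
  qed
  have flowq: "F' (v,s) Emink = H (v,s) *\<^sub>R N (v,s)" if "v \<in> U" "s \<in> {0..<T}" for v s
  proof -
    have vsG: "(v,s) \<in> G" using UTG that by blast
    have lin: "linear (F' (v,s))" using dF[OF UTW[OF that]] has_derivative_bounded_linear bounded_linear.linear by blast
    have "((\<lambda>s'. F (v,s')) has_derivative (\<lambda>r. F' (v,s) (0,r))) (at s)"
      by (rule part_t[OF dF[OF UTW[OF that]]])
    moreover have "(\<lambda>r. F' (v,s) (0,r)) = (\<lambda>r. r *\<^sub>R F' (v,s) Emink)"
    proof
      fix r :: real
      have "(0::real^'n, r) = r *\<^sub>R Emink" by (simp add: Emink_def)
      then show "F' (v,s) (0,r) = r *\<^sub>R F' (v,s) Emink" using lin by (simp add: linear_cmul)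
    qed
    ultimately have "((\<lambda>s'. F (v,s')) has_vector_derivative F' (v,s) Emink) (at s)"
      by (simp add: has_vector_derivative_def)
    then have "vector_derivative (\<lambda>s'. F (v,s')) (at s) = F' (v,s) Emink" by (rule vector_derivative_at)
    moreover have "vector_derivative (\<lambda>s'. F (v,s')) (at s) = mcurv F v s *\<^sub>R nu F v s"
      using flow that by blast
    ultimately show ?thesis
      using mcurv_eq[OF oW sF] nu_eq[OF oW sF] vsG by (simp add: G_def H_def N_def)
  qed
  obtain r where r: "r > 0" "\<And>s k. 0 \<le> s \<Longrightarrow> s < r \<Longrightarrow> u + s *\<^sub>R axis k 1 \<in> U"
    using chart_rays[OF U_chart uU] by blast
  have DTeq: "DT h = DH h *\<^sub>R N0 + H0 *\<^sub>R DN h" for h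
  proof -
    define US where "US = U \<times> {0..<T}"
    have d1: "((\<lambda>q. F' q Emink) has_derivative DT) (at p0 within US)"
      by (rule has_derivative_at_withinI[OF dT])
    have d2: "((\<lambda>q. H q *\<^sub>R N q) has_derivative (\<lambda>h. H p0 *\<^sub>R DN h + DH h *\<^sub>R N p0)) (at p0)"
      by (rule bounded_bilinear.FDERIV[OF bounded_bilinear_scaleR dH dN])
    have d2': "((\<lambda>q. F' q Emink) has_derivative (\<lambda>h. H p0 *\<^sub>R DN h + DH h *\<^sub>R N p0)) (at p0 within US)"
    proof (rule has_derivative_transform_within[OF has_derivative_at_withinI[OF d2] zero_less_one])
      show "p0 \<in> US" using uU tT by (simp add: US_def p0_def)
      fix q assume "q \<in> US"
      then show "H q *\<^sub>R N q = F' q Emink" using flowq by (cases q) (auto simp: US_def)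
    qed
    have "DT = (\<lambda>h. H p0 *\<^sub>R DN h + DH h *\<^sub>R N p0)"
    proof (rule frechet_derivative_unique_within[OF d1 d2'])
      fix i :: "'n pt" and e :: real assume i: "i \<in> Basis" and e: "e > 0"
      define d where "d = min e (min r (T - t)) / 2"
      have m: "min e (min r (T - t)) > 0" "min e (min r (T - t)) \<le> e"
        "min e (min r (T - t)) \<le> r" "min e (min r (T - t)) \<le> T - t" using e r(1) tT by auto
      have d0: "d > 0" "d < e" "d < r" "t + d < T" using m unfolding d_def by linarith+
      have "p0 + d *\<^sub>R i \<in> US"
      proof (cases "i \<in> (\<lambda>v. (v, 0)) ` Basis")
        case True
        then obtain b :: "real^'n" where b: "b \<in> Basis" "i = (b, 0)" by blast
        then obtain k where "b = axis k 1" by (auto simp: Basis_vec_def)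
        then have "p0 + d *\<^sub>R i = (u + d *\<^sub>R axis k 1, t)" using b by (simp add: p0_def)
        then show ?thesis using r(2)[of d k] d0 tT by (simp add: US_def)
      next
        case False
        then have "i = (0, 1)" using i by (auto simp: Basis_prod_def)
        then have "p0 + d *\<^sub>R i = (u, t + d)" by (simp add: p0_def)
        then show ?thesis using uU d0 tT by (simp add: US_def)
      qed
      then show "\<exists>d. 0 < \<bar>d\<bar> \<and> \<bar>d\<bar> < e \<and> p0 + d *\<^sub>R i \<in> US"
        using d0 by (intro exI[of _ d]) simp
    qed
    then show ?thesis by (simp add: H0_def N0_def add.commute)
  qed
  define \<Phi> where "\<Phi> q = mink (N q) (\<mu> (F q))" for q
  have d\<mu>F: "((\<lambda>q. \<mu> (F q)) has_derivative (\<lambda>h. D\<mu> (F' p0 h))) (at p0)"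
    using diff_chain_at[OF dF[OF p0W], of \<mu> D\<mu>] d\<mu> by (simp add: o_def F0_def)
  have d\<Phi>: "(\<Phi> has_derivative (\<lambda>h. mink (N p0) (D\<mu> (F' p0 h)) + mink (DN h) (\<mu> (F p0)))) (at p0)"
    unfolding \<Phi>_def[abs_def] by (rule bounded_bilinear.FDERIV[OF bb_mink dN d\<mu>F])
  have \<Phi>0: "\<Phi> (v,s) = 0" if "v \<in> U" "s \<in> {0..<T}" "v $ i0 = 0" for v s
  proof -
    have "mink (nu F v s) (cone_normal \<phi> (F (v,s))) = 0" using neumann that by blast
    then show ?thesis using nu_eq[OF oW sF, of v s] UTG[OF that(1,2)]
      by (simp add: \<Phi>_def G_def N_def \<mu>_def)
  qed
  have \<Phi>p0: "\<Phi> p0 = 0" using \<Phi>0 uU tT ub by (simp add: p0_def)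
  have timeN: "mink N0 (D\<mu> (F' p0 Emink)) + mink (DN Emink) \<mu>0 = 0"
  proof -
    have "mink (N p0) (D\<mu> (F' p0 Emink)) + mink (DN Emink) (\<mu> (F p0)) = 0"
    proof (rule ray_zero[OF d\<Phi>, of "T - t"])
      show "T - t > 0" using tT by simp
      fix s :: real assume s: "0 \<le> s" "s < T - t"
      have "p0 + s *\<^sub>R Emink = (u, t + s)" by (simp add: p0_def Emink_def)
      then show "\<Phi> (p0 + s *\<^sub>R Emink) = \<Phi> p0" using \<Phi>0[of u "t + s"] \<Phi>p0 uU ub s tT by simp
    qed
    then show ?thesis by (simp add: N0_def \<mu>0_def F0_def)
  qed
  have bdN: "mink N0 (D\<mu> (X k)) + mink (DN (esp k)) \<mu>0 = 0" if k: "k \<noteq> i0" for k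
  proof -
    have "mink (N p0) (D\<mu> (F' p0 (esp k))) + mink (DN (esp k)) (\<mu> (F p0)) = 0"
    proof (rule ray_zero[OF d\<Phi> r(1)])
      fix s :: real assume s: "0 \<le> s" "s < r"
      have "p0 + s *\<^sub>R esp k = (u + s *\<^sub>R axis k 1, t)" by (simp add: p0_def esp_def)
      moreover have "(u + s *\<^sub>R axis k 1) $ i0 = 0" using ub k by (simp add: axis_def)
      ultimately show "\<Phi> (p0 + s *\<^sub>R esp k) = \<Phi> p0" using \<Phi>0 \<Phi>p0 r(2)[OF s] tT by simp
    qed
    then show ?thesis by (simp add: N0_def \<mu>0_def F0_def Xj)
  qed
  have F0V0: "F0 \<in> V0" using lx by (simp add: V0_def)
  have tang: "mink \<mu>0 (X k) = 0" if k: "k \<noteq> i0" for k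
  proof -
    define \<Psi> where "\<Psi> q = \<phi> (xmap (F q))" for q
    have d\<Psi>: "(\<Psi> has_derivative (\<lambda>h. mink (Nc \<phi> F0) (F' p0 h) / snd F0)) (at p0)"
      using diff_chain_at[OF dF[OF p0W] psi_deriv[OF phi_smooth F0V0, unfolded F0_def]]
      by (simp add: o_def \<Psi>_def[abs_def] F0_def)
    have \<Psi>0: "\<Psi> (v,s) = 0" if "v \<in> U" "s \<in> {0..<T}" "v $ i0 = 0" for v s
    proof -
      have "F (v,s) \<in> bcone \<phi>" using bdry that by blast
      then obtain l' x' where "l' > 0" "\<phi> x' = 0" "F (v,s) = (l' *\<^sub>R x', l')" by (rule bcone_pt)
      then show ?thesis by (simp add: \<Psi>_def xmap_bcone)
    qed
    have "mink (Nc \<phi> F0) (F' p0 (esp k)) / snd F0 = 0"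
    proof (rule ray_zero[OF d\<Psi> r(1)])
      fix s :: real assume s: "0 \<le> s" "s < r"
      have "p0 + s *\<^sub>R esp k = (u + s *\<^sub>R axis k 1, t)" by (simp add: p0_def esp_def)
      moreover have "(u + s *\<^sub>R axis k 1) $ i0 = 0" using ub k by (simp add: axis_def)
      ultimately show "\<Psi> (p0 + s *\<^sub>R esp k) = \<Psi> p0" using \<Psi>0 r(2)[OF s] tT uU ub by (simp add: p0_def)
    qed
    then have "mink (Nc \<phi> F0) (X k) = 0" using lx by (simp add: Xj)
    then show ?thesis by (simp add: \<mu>0_def \<mu>_def cone_normal_eq mink_scaleR_left)
  qed
  have homog: "D\<mu> F0 = 0"
  proof (rule ray_zero[OF d\<mu> zero_less_one])
    fix s :: real assume s: "0 \<le> s" "s < 1"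
    have "F0 + s *\<^sub>R F0 = (1 + s) *\<^sub>R F0" by (simp add: algebra_simps)
    then show "\<mu> (F0 + s *\<^sub>R F0) = \<mu> F0" using cone_homog[of "1 + s" \<phi> F0] s by (simp add: \<mu>_def)
  qed
  have XN: "mink (X k) N0 = 0" for k using Nprops(1) by (simp add: mink_sym)
  define m where "m = coef X \<mu>0"
  have \<mu>span: "\<mu>0 = (\<Sum>j\<in>UNIV. m $ j *\<^sub>R X j)"
  proof -
    have "\<mu>0 - proj X \<mu>0 = 0"
    proof (rule span_zero[OF dets])
      show "mink (\<mu>0 - proj X \<mu>0) (X k) = 0" for k by (simp add: mink_diff_left proj_prop[OF dets(1)])
      have "mink (proj X \<mu>0) N0 = 0" by (simp add: proj_def mink_sum_left mink_scaleR_left XN)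
      then show "mink (\<mu>0 - proj X \<mu>0) (nvec X) = 0"
        using N\<mu> by (simp add: mink_diff_left mink_diff_right N0X[symmetric] mink_sym)
    qed
    then show ?thesis by (simp add: proj_def m_def)
  qed
  define a where "a = coef X (F0 - S0 *\<^sub>R N0)"
  have S0eq: "S0 = - mink F0 N0" by (simp add: S0_def S_def SF_def F0_def N0_def N_def)
  have Fspan: "F0 - S0 *\<^sub>R N0 = (\<Sum>k\<in>UNIV. a $ k *\<^sub>R X k)"
  proof -
    have "(F0 - S0 *\<^sub>R N0) - proj X (F0 - S0 *\<^sub>R N0) = 0"
    proof (rule span_zero[OF dets])
      show "mink ((F0 - S0 *\<^sub>R N0) - proj X (F0 - S0 *\<^sub>R N0)) (X k) = 0" for k
        by (simp only: mink_diff_left proj_prop[OF dets(1)] diff_self)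
      have "mink (proj X (F0 - S0 *\<^sub>R N0)) N0 = 0" by (simp add: proj_def mink_sum_left mink_scaleR_left XN)
      then show "mink ((F0 - S0 *\<^sub>R N0) - proj X (F0 - S0 *\<^sub>R N0)) (nvec X) = 0"
        using Nprops(2) S0eq by (simp add: mink_diff_left mink_add_left mink_scaleR_left N0X[symmetric])
    qed
    then show ?thesis by (simp add: proj_def a_def)
  qed
  define mh where "mh = (\<Sum>j\<in>UNIV. m $ j *\<^sub>R (esp j :: 'n pt))"
  have F'mh: "F' p0 mh = \<mu>0"
    using linF' by (simp add: mh_def linear_sum linear_cmul Xj[symmetric] \<mu>span[symmetric])
  have DNmh: "DN mh = (\<Sum>j\<in>UNIV. m $ j *\<^sub>R DN (esp j))"
    using linDN by (simp add: mh_def linear_sum linear_cmul)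
  have DHmh0: "DH mh = (\<Sum>j\<in>UNIV. m $ j * DH (esp j))"
    using linDH by (simp add: mh_def linear_sum linear_cmul)
  have DHj: "DH (esp j) = mink (DN Emink) (X j)" for j
  proof -
    have e1: "mink N0 (DX j Emink) = DH (esp j) * mink N0 N0 + H0 * mink N0 (DN (esp j))"
      by (simp add: symT DTeq mink_add_right mink_scaleR_right)
    have e2: "mink N0 (DN (esp j)) = 0" using normN[of "esp j"] mink_sym[of N0 "DN (esp j)"] by simp
    have e3: "mink N0 (DX j Emink) + mink (DN Emink) (X j) = 0" by (rule orth)
    show ?thesis using e1 e2 e3 Nprops(2) by simp
  qed
  define c where "c = mink N0 (D\<mu> N0)"
  have DHmh: "DH mh = - H0 * c"
  proof -
    have "DH mh = mink (DN Emink) \<mu>0"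
      by (simp add: DHmh0 DHj \<mu>span mink_sum_right mink_scaleR_right mult.commute)
    also have "\<dots> = - mink N0 (D\<mu> (F' p0 Emink))" using timeN by simp
    also have "F' p0 Emink = H0 *\<^sub>R N0" using flowq[OF uU tT] by (simp add: p0_def H0_def N0_def)
    finally show ?thesis using linD\<mu> by (simp add: linear_cmul mink_scaleR_right c_def)
  qed
  have DSeq: "DS h = - (mink F0 (DN h) + mink (F' p0 h) N0)" for h
  proof -
    have "(S has_derivative (\<lambda>h. - (mink (F p0) (DN h) + mink (F' p0 h) (N p0)))) (at p0)"
      unfolding S_def SF_def[abs_def] N_def[symmetric]
      by (rule has_derivative_minus[OF bounded_bilinear.FDERIV[OF bb_mink dF[OF p0W] dN]])
    then have "DS = (\<lambda>h. - (mink (F p0) (DN h) + mink (F' p0 h) (N p0)))"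
      using dS has_derivative_unique by blast
    then show ?thesis by (simp add: F0_def N0_def)
  qed
  have symA: "mink (DN (esp j)) (X k) = mink (DN (esp k)) (X j)" for j k
    using orth[of k "esp j"] orth[of j "esp k"] symX[of j k] by simp
  have Xi0: "mink (X i0) \<mu>0 \<noteq> 0"
  proof
    assume z: "mink (X i0) \<mu>0 = 0"
    have "mink \<mu>0 \<mu>0 = (\<Sum>k\<in>UNIV. m $ k * mink (X k) \<mu>0)"
      by (subst (1) \<mu>span) (simp add: mink_sum_left mink_scaleR_left)
    also have "\<dots> = 0"
    proof (rule sum.neutral, rule ballI)
      fix k :: 'n
      show "m $ k * mink (X k) \<mu>0 = 0"
      proof (cases "k = i0")
        case True then show ?thesis using z by simp
      next
        case False then show ?thesis using tang[OF False] mink_sym[of \<mu>0 "X k"] by simp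
      qed
    qed
    finally show False using cp(2) by simp
  qed
  have ai0: "a $ i0 = 0"
  proof -
    have "mink (F0 - S0 *\<^sub>R N0) \<mu>0 = 0" using cp(1) N\<mu> by (simp add: mink_diff_left mink_scaleR_left)
    moreover have "mink (F0 - S0 *\<^sub>R N0) \<mu>0 = (\<Sum>k\<in>UNIV. a $ k * mink (X k) \<mu>0)"
      by (simp add: Fspan mink_sum_left mink_scaleR_left)
    moreover have "(\<Sum>k\<in>UNIV. a $ k * mink (X k) \<mu>0) = a $ i0 * mink (X i0) \<mu>0"
    proof (rule sum_single)
      fix k assume "k \<noteq> i0"
      then show "a $ k * mink (X k) \<mu>0 = 0" using tang[of k] mink_sym[of \<mu>0 "X k"] by simp
    qed
    ultimately show ?thesis using Xi0 by simp
  qed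
  have sumA: "(\<Sum>k\<in>UNIV. a $ k * mink (DN (esp k)) \<mu>0) = S0 * c"
  proof -
    have "(\<Sum>k\<in>UNIV. a $ k * mink (DN (esp k)) \<mu>0) = (\<Sum>k\<in>UNIV. - (a $ k * mink N0 (D\<mu> (X k))))"
    proof (rule sum.cong[OF refl])
      fix k
      show "a $ k * mink (DN (esp k)) \<mu>0 = - (a $ k * mink N0 (D\<mu> (X k)))"
      proof (cases "k = i0")
        case True then show ?thesis using ai0 by simp
      next
        case False
        then have "mink (DN (esp k)) \<mu>0 = - mink N0 (D\<mu> (X k))" using bdN[OF False] by linarith
        then show ?thesis by simp
      qed
    qed
    also have "\<dots> = - mink N0 (D\<mu> (\<Sum>k\<in>UNIV. a $ k *\<^sub>R X k))"
      using linD\<mu> by (simp add: linear_sum linear_cmul mink_sum_right mink_scaleR_right sum_negf)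
    also have "\<dots> = - mink N0 (D\<mu> (F0 - S0 *\<^sub>R N0))" by (simp only: Fspan)
    also have "\<dots> = S0 * c"
      using linD\<mu> homog by (simp add: linear_diff linear_cmul mink_diff_right mink_scaleR_right c_def mink_zero_right mink_minus_right)
    finally show ?thesis .
  qed
  have DSmh: "DS mh = - S0 * c"
  proof -
    have "mink F0 (DN mh) = mink (S0 *\<^sub>R N0 + (F0 - S0 *\<^sub>R N0)) (DN mh)" by simp
    also have "\<dots> = S0 * mink N0 (DN mh) + (\<Sum>k\<in>UNIV. a $ k * mink (X k) (DN mh))"
      by (simp only: mink_add_left mink_scaleR_left Fspan mink_sum_left real_scaleR_def)
    also have "mink N0 (DN mh) = 0" using normN[of mh] by (simp add: mink_sym)
    also have "(\<Sum>k\<in>UNIV. a $ k * mink (X k) (DN mh)) = (\<Sum>k\<in>UNIV. a $ k * mink (DN (esp k)) \<mu>0)"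
    proof (rule sum.cong[OF refl])
      fix k
      have "mink (X k) (DN mh) = (\<Sum>j\<in>UNIV. m $ j * mink (DN (esp j)) (X k))"
        by (simp add: DNmh mink_sum_right mink_scaleR_right mink_sym)
      also have "\<dots> = (\<Sum>j\<in>UNIV. m $ j * mink (DN (esp k)) (X j))" by (simp add: symA)
      also have "\<dots> = mink (DN (esp k)) \<mu>0"
        by (simp add: \<mu>span mink_sum_right mink_scaleR_right)
      finally show "a $ k * mink (X k) (DN mh) = a $ k * mink (DN (esp k)) \<mu>0" by simp
    qed
    finally have "mink F0 (DN mh) = S0 * c" using sumA by simp
    then show ?thesis using DSeq[of mh] F'mh N\<mu> by (simp add: mink_sym)
  qed
  define Q where "Q q = H q / S q" for q
  define DQ where "DQ h = (DH h * S0 - H0 * DS h) / (S0 * S0)" for h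
  have dQ: "(Q has_derivative DQ) (at p0)"
    unfolding Q_def[abs_def] DQ_def[abs_def] H0_def S0_def
    by (rule has_derivative_divide'[OF dH dS]) (use S0pos S0_def in simp)
  have linDQ: "linear DQ" using dQ has_derivative_bounded_linear bounded_linear.linear by blast
  have DQmh: "DQ mh = 0" by (simp add: DQ_def DHmh DSmh algebra_simps)
  have fd: "frechet_derivative (\<lambda>v. mcurv F v t / Sfun F v t) (at u) = (\<lambda>h. DQ (h, 0))"
  proof (rule transfer_u[OF oG p0G[unfolded p0_def] _ dQ[unfolded p0_def]])
    fix v assume "(v, t) \<in> G"
    then show "mcurv F v t / Sfun F v t = Q (v, t)"
      using mcurv_eq[OF oW sF] Sfun_eq[OF oW sF] by (simp add: G_def Q_def H_def S_def)
  qed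
  have gi: "ginv F u t = matrix_inv (gram X)" by (simp add: ginv_def gmat_eq[OF oW sF p0W[unfolded p0_def]] X_def p0_def)
  have dXe: "dX F u t i = X i" for i by (simp add: dX_eq[OF oW sF p0W[unfolded p0_def]] X_def p0_def)
  have "mink (mgrad F t (\<lambda>v. mcurv F v t / Sfun F v t) u) \<mu>0
      = (\<Sum>i\<in>UNIV. \<Sum>j\<in>UNIV. matrix_inv (gram X) $ i $ j * DQ (esp j) * mink (X i) \<mu>0)"
    unfolding mgrad_def fd gi dXe by (simp add: mink_sum_left mink_scaleR_left esp_def)
  also have "\<dots> = (\<Sum>j\<in>UNIV. \<Sum>i\<in>UNIV. matrix_inv (gram X) $ i $ j * DQ (esp j) * mink (X i) \<mu>0)"
    by (rule sum.swap)
  also have "\<dots> = (\<Sum>j\<in>UNIV. m $ j * DQ (esp j))"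
    by (simp add: m_def coef_nth sum_distrib_left sum_distrib_right mult_ac)
  also have "\<dots> = DQ mh" using linDQ by (simp add: mh_def linear_sum linear_cmul)
  finally show "mink (mgrad F t (\<lambda>v. mcurv F v t / Sfun F v t) u) (cone_normal \<phi> (F (u, t))) = 0"
    using DQmh by (simp add: \<mu>0_def \<mu>_def F0_def p0_def)
qed


end
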